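(* Let $(M,\mathcal{T})$ be a closed pseudo 3-manifold with edge set $E$. For any initial generalized decorated metric $l_0\in\mathbb{R}^E$, there exists a unique solution $\{l(t)\mid t\in[0,\infty)\}\subset\mathbb{R}^E$ to the extended Ricci flow $$\frac{d}{dt}l(t)=\widetilde{K}(l(t)),\quad t\ge 0,\qquad l(0)=l_0.$$
   Context: Pseudo 3-manifold: take finitely many tetrahedra $T_1,\dots,T_t$ and let $\mathscr{T}=T_1\sqcup\cdots\sqcup T_t$. The quotient $(M,\mathcal{T})=\mathscr{T}/\sim$ by a family of affine isomorphisms pairing faces of the tetrahedra is a compact pseudo 3-manifold with triangulation $\mathcal{T}$; it is closed if every 2-dimensional face of a tetrahedron in $\mathscr{T}$ is identified with another such face. $V$ and $E$ denote the sets of (equivalence classes of) vertices and edges of $\mathcal{T}$. For a tetrahedron $\sigma$ of $\mathscr{T}$ with vertices $v_1,\dots,v_4$ and $l\in\mathbb{R}^E$, let $l_\sigma=(l_{12},\dots,l_{34})\in\mathbb{R}^6$ where $l_{ij}=l(\text{class of }v_iv_j)$. Generalized Euclidean triangle angles: for $(x_1,x_2,x_3)\in\mathbb{R}^3_{>0}$, if strict triangle inequalities hold, $a_i$ is the inner angle of the Euclidean triangle with side lengths $x_1,x_2,x_3$ opposite to the side of length $x_i$; if $x_i\ge x_j+x_k$ ($\{i,j,k\}=\{1,2,3\}$), then $a_i=\pi$, $a_j=a_k=0$. Extended dihedral angles: for $l=(l_{12},\dots,l_{34})\in\mathbb{R}^6$ (with $l_{ij}=l_{ji}$) and $\{i,j,k,h\}=\{1,2,3,4\}$,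 $\alpha_{ij}(l)$ is the generalized angle opposite to the side of length $e^{(l_{ij}+l_{kh})/2}$ in the generalized Euclidean triangle with side lengths $e^{(l_{ij}+l_{kh})/2}, e^{(l_{ik}+l_{jh})/2}, e^{(l_{ih}+l_{jk})/2}$. (When strict triangle inequalities hold, these are the dihedral angles of the decorated ideal hyperbolic tetrahedron with signed edge lengths $l_{ij}$.) A generalized decorated metric is any $l\in\mathbb{R}^E$. Its generalized Ricci curvature at $e\in E$ is $\widetilde{K}_e(l)=2\pi-\sum \alpha_{ij}(l_\sigma)$, the sum over all pairs $(\sigma, v_iv_j)$ with $\sigma$ a tetrahedron of $\mathscr{T}$ and $v_iv_j$ an edge of $\sigma$ lying in the class $e$; $\widetilde K(l)=(\widetilde K_e(l))_{e\in E}$. *)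

theory Defs
  imports Complex_Main
begin

text \<open>Tetrahedra are the elements of a finite set T :: 'a set; the vertices of each
  tetrahedron are labelled 0,1,2,3.  A 2-face of a tetrahedron sigma is written
  (sigma, k), the face opposite to vertex k.  A face pairing is given by
  glue :: 'a \<times> nat \<Rightarrow> ('a \<times> nat \<times> (nat \<Rightarrow> nat)) option:
  glue (sigma,k) = Some (tau,m,phi) means face (sigma,k) is identified with the
  distinct face (tau,m) by the affine isomorphism sending vertex i to vertex phi i.
  An edge of the disjoint union is (sigma, {i,j}) with i \<noteq> j.\<close>

definition pseudo3 :: "'a set \<Rightarrow> ('a \<times> nat \<Rightarrow> ('a \<times> nat \<times> (nat \<Rightarrow> nat)) option) \<Rightarrow> bool" where
  "pseudo3 T glue \<longleftrightarrow> finite T \<and>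
     (\<forall>\<sigma> k. glue (\<sigma>, k) \<noteq> None \<longrightarrow> \<sigma> \<in> T \<and> k < 4) \<and>
     (\<forall>\<sigma> k \<tau> m \<phi>. glue (\<sigma>, k) = Some (\<tau>, m, \<phi>) \<longrightarrow>
        \<tau> \<in> T \<and> m < 4 \<and> (\<tau>, m) \<noteq> (\<sigma>, k) \<and>
        bij_betw \<phi> ({..<4} - {k}) ({..<4} - {m}) \<and>
        (\<exists>\<psi>. glue (\<tau>, m) = Some (\<sigma>, k, \<psi>) \<and> (\<forall>i \<in> {..<4} - {k}. \<psi> (\<phi> i) = i)))"

definition closed3 :: "'a set \<Rightarrow> ('a \<times> nat \<Rightarrow> ('a \<times> nat \<times> (nat \<Rightarrow> nat)) option) \<Rightarrow> bool" where
  "closed3 T glue \<longleftrightarrow> (\<forall>\<sigma>\<in>T. \<forall>k<4. glue (\<sigma>, k) \<noteq> None)"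

definition tet_edges :: "'a set \<Rightarrow> ('a \<times> nat set) set" where
  "tet_edges T = {(\<sigma>, {i, j}) | \<sigma> i j. \<sigma> \<in> T \<and> i < 4 \<and> j < 4 \<and> i \<noteq> j}"

definition edge_step :: "('a \<times> nat \<Rightarrow> ('a \<times> nat \<times> (nat \<Rightarrow> nat)) option) \<Rightarrow> (('a \<times> nat set) \<times> ('a \<times> nat set)) set" where
  "edge_step glue = {((\<sigma>, {i, j}), (\<tau>, {\<phi> i, \<phi> j})) | \<sigma> k \<tau> m \<phi> i j.
      glue (\<sigma>, k) = Some (\<tau>, m, \<phi>) \<and> i < 4 \<and> j < 4 \<and> i \<noteq> j \<and> i \<noteq> k \<and> j \<noteq> k}"

definition edge_rel :: "'a set \<Rightarrow> ('a \<times> nat \<Rightarrow> ('a \<times> nat \<times> (nat \<Rightarrow> nat)) option) \<Rightarrow> (('a \<times> nat set) \<times> ('a \<times> nat set)) set" where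
  "edge_rel T glue = Id_on (tet_edges T) \<union> (edge_step glue \<union> (edge_step glue)\<inverse>)\<^sup>+"

definition edge_class :: "'a set \<Rightarrow> ('a \<times> nat \<Rightarrow> ('a \<times> nat \<times> (nat \<Rightarrow> nat)) option) \<Rightarrow> 'a \<times> nat set \<Rightarrow> ('a \<times> nat set) set" where
  "edge_class T glue x = edge_rel T glue `` {x}"

definition edges :: "'a set \<Rightarrow> ('a \<times> nat \<Rightarrow> ('a \<times> nat \<times> (nat \<Rightarrow> nat)) option) \<Rightarrow> ('a \<times> nat set) set set" where
  "edges T glue = tet_edges T // edge_rel T glue"

definition gen_angle :: "real \<Rightarrow> real \<Rightarrow> real \<Rightarrow> real" where
  "gen_angle a b c =
     (if a \<ge> b + c then pi
      else if b \<ge> a + c \<or> c \<ge> a + b then 0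
      else arccos ((b\<^sup>2 + c\<^sup>2 - a\<^sup>2) / (2 * b * c)))"

text \<open>Extended dihedral angle at the edge {i,j} of a tetrahedron with vertices 0..3
  whose (signed) edge lengths are L {p,q}; {k,h} is the opposite edge.\<close>
definition ext_dihedral :: "(nat set \<Rightarrow> real) \<Rightarrow> nat \<Rightarrow> nat \<Rightarrow> real" where
  "ext_dihedral L i j =
     (let k = Min ({..<4} - {i, j}); h = Max ({..<4} - {i, j}) in
      gen_angle (exp ((L {i, j} + L {k, h}) / 2))
                (exp ((L {i, k} + L {j, h}) / 2))
                (exp ((L {i, h} + L {j, k}) / 2)))"

definition gen_curv :: "'a set \<Rightarrow> ('a \<times> nat \<Rightarrow> ('a \<times> nat \<times> (nat \<Rightarrow> nat)) option) \<Rightarrow> (('a \<times> nat set) set \<Rightarrow> real) \<Rightarrow> ('a \<times> nat set) set \<Rightarrow> real" where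
  "gen_curv T glue l e = 2 * pi -
     (\<Sum>(\<sigma>, p) \<in> {x \<in> tet_edges T. edge_class T glue x = e}.
        ext_dihedral (\<lambda>q. l (edge_class T glue (\<sigma>, q))) (Min p) (Max p))"

definition ricci_flow_solution :: "'a set \<Rightarrow> ('a \<times> nat \<Rightarrow> ('a \<times> nat \<times> (nat \<Rightarrow> nat)) option) \<Rightarrow> (('a \<times> nat set) set \<Rightarrow> real) \<Rightarrow> (real \<Rightarrow> ('a \<times> nat set) set \<Rightarrow> real) \<Rightarrow> bool" where
  "ricci_flow_solution T glue l0 l \<longleftrightarrow>
     (\<forall>e \<in> edges T glue. l 0 e = l0 e) \<and>
     (\<forall>t \<ge> 0. \<forall>e \<in> edges T glue.
        ((\<lambda>s. l s e) has_real_derivative gen_curv T glue (l t) e) (at t within {0..}))"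

end

theory Submission
  imports Defs "HOL-Analysis.Analysis"
begin


definition Ang :: "real \<Rightarrow> real \<Rightarrow> real \<Rightarrow> real" where
  "Ang s1 s2 s3 = gen_angle (exp (s1/2)) (exp (s2/2)) (exp (s3/2))"

definition clampr :: "real \<Rightarrow> real" where
  "clampr q = max (-1) (min 1 q)"

lemma gen_angle_sym: "gen_angle a b c = gen_angle a c b"
  unfolding gen_angle_def by (simp add: ac_simps)

lemma gen_angle_clampr:
  assumes a: "a > 0" and b: "b > 0" and c: "c > 0"
  shows "gen_angle a b c = arccos (clampr ((b\<^sup>2 + c\<^sup>2 - a\<^sup>2) / (2 * b * c)))"
proof -
  define q where "q = (b\<^sup>2 + c\<^sup>2 - a\<^sup>2) / (2 * b * c)"
  have bc: "2 * b * c > 0" using b c by simp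
  show ?thesis
  proof (cases "a \<ge> b + c")
    case True
    have "(b+c)\<^sup>2 \<le> a\<^sup>2" using True b c by (intro power_mono) auto
    hence "q \<le> -1" unfolding q_def using bc by (simp add: divide_le_eq power2_eq_square algebra_simps)
    hence "clampr q = -1" unfolding clampr_def by simp
    thus ?thesis using True unfolding gen_angle_def q_def by simp
  next
    case F1: False
    show ?thesis
    proof (cases "b \<ge> a + c \<or> c \<ge> a + b")
      case True
      have "a\<^sup>2 \<le> (b - c)\<^sup>2"
      proof (cases "b \<ge> a + c")
        case True thus ?thesis using a c by (intro power_mono) auto
      next
        case False
        hence "c \<ge> a + b" using \<open>b \<ge> a + c \<or> c \<ge> a + b\<close> by simp
        hence "a\<^sup>2 \<le> (c - b)\<^sup>2" using a b by (intro power_mono) auto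
        thus ?thesis by (simp add: power2_commute)
      qed
      hence "q \<ge> 1" unfolding q_def using bc by (simp add: le_divide_eq power2_eq_square algebra_simps)
      hence "clampr q = 1" unfolding clampr_def by simp
      thus ?thesis using True F1 unfolding gen_angle_def q_def by simp
    next
      case False
      have "a\<^sup>2 < (b+c)\<^sup>2" using F1 a by (intro power_strict_mono) auto
      hence q1: "q > -1" unfolding q_def using bc by (simp add: less_divide_eq power2_eq_square algebra_simps)
      have "\<bar>b - c\<bar> < a" using False by auto
      hence "\<bar>b - c\<bar>\<^sup>2 < a\<^sup>2" by (intro power_strict_mono) auto
      hence "(b - c)\<^sup>2 < a\<^sup>2" by simp
      hence q2: "q < 1" unfolding q_def using bc by (simp add: divide_less_eq power2_eq_square algebra_simps)
      have "clampr q = q" using q1 q2 unfolding clampr_def by simp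
      thus ?thesis using False F1 unfolding gen_angle_def q_def by simp
    qed
  qed
qed

lemma Ang_clampr: "Ang s1 s2 s3 = arccos (clampr (((exp (s2/2))\<^sup>2 + (exp (s3/2))\<^sup>2 - (exp (s1/2))\<^sup>2) / (2 * exp (s2/2) * exp (s3/2))))"
  unfolding Ang_def by (rule gen_angle_clampr) auto

lemma continuous_clampr: "continuous_on UNIV clampr"
  unfolding clampr_def by (intro continuous_intros)

lemma clampr_bounds: "-1 \<le> clampr q" "clampr q \<le> 1"
  unfolding clampr_def by auto

lemma gen_angle_bounds:
  assumes "a > 0" "b > 0" "c > 0"
  shows "0 \<le> gen_angle a b c" "gen_angle a b c \<le> pi"
  using gen_angle_clampr[OF assms] clampr_bounds arccos_lbound arccos_ubound by auto

lemma Ang_bounds: "0 \<le> Ang s1 s2 s3" "Ang s1 s2 s3 \<le> pi"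
  unfolding Ang_def by (rule gen_angle_bounds; simp)+

lemma continuous_Ang:
  "continuous_on UNIV (\<lambda>s::real\<times>real\<times>real. Ang (fst s) (fst (snd s)) (snd (snd s)))"
proof -
  have "continuous_on UNIV (\<lambda>s::real\<times>real\<times>real. arccos (clampr (((exp (fst (snd s)/2))\<^sup>2 + (exp (snd (snd s)/2))\<^sup>2 - (exp (fst s/2))\<^sup>2) / (2 * exp (fst (snd s)/2) * exp (snd (snd s)/2)))))"
    apply (rule continuous_on_arccos)
     apply (rule continuous_on_compose2[OF continuous_clampr])
      apply (intro continuous_intros)
    by (auto simp: clampr_bounds)
  thus ?thesis by (simp add: Ang_clampr)
qed

definition QQ :: "real \<Rightarrow> real \<Rightarrow> real \<Rightarrow> real" where
  "QQ y1 y2 y3 = 2*(y1*y2+y2*y3+y3*y1) - y1\<^sup>2 - y2\<^sup>2 - y3\<^sup>2"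

definition tri :: "real \<Rightarrow> real \<Rightarrow> real \<Rightarrow> bool" where
  "tri x1 x2 x3 \<longleftrightarrow> x1 < x2 + x3 \<and> x2 < x1 + x3 \<and> x3 < x1 + x2"

definition Xf :: "real \<Rightarrow> real \<Rightarrow> real \<Rightarrow> real" where
  "Xf p d \<tau> = exp ((p + \<tau> * d) / 2)"

lemma QQ_factor: "QQ (x1\<^sup>2) (x2\<^sup>2) (x3\<^sup>2) = (x1+x2+x3)*(x2+x3-x1)*(x1+x3-x2)*(x1+x2-x3)"
  unfolding QQ_def by algebra

lemma QQ_pos: "tri x1 x2 x3 \<Longrightarrow> QQ (x1\<^sup>2) (x2\<^sup>2) (x3\<^sup>2) > 0"
  unfolding QQ_factor tri_def by (intro mult_pos_pos) auto

lemma QQ_sym: "QQ y2 y1 y3 = QQ y1 y2 y3" "QQ y3 y1 y2 = QQ y1 y2 y3"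
  unfolding QQ_def by algebra+

lemma Xf_deriv: "(Xf p d has_real_derivative (Xf p d t * (d/2))) (at t)"
  unfolding Xf_def by (rule derivative_eq_intros refl | simp)+

lemma Xf_pos: "Xf p d t > 0" unfolding Xf_def by simp

lemma open_tri: "open {\<tau>. tri (Xf p1 d1 \<tau>) (Xf p2 d2 \<tau>) (Xf p3 d3 \<tau>)}"
  unfolding tri_def Xf_def
  by (intro open_Collect_conj open_Collect_less continuous_intros; simp)

lemma one_minus_sq_div: "(B::real) \<noteq> 0 \<Longrightarrow> 1 - (A/B)\<^sup>2 = (B\<^sup>2 - A\<^sup>2)/B\<^sup>2"
  by (simp add: power_divide diff_divide_distrib)

lemma inv_aux: "(a::real) > 0 \<Longrightarrow> b > 0 \<Longrightarrow> inverse (- (a/b)) * (N/b) = - N / a"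
  by (simp add: field_simps)

lemma Ang_deriv:
  fixes p1 p2 p3 d1 d2 d3 t :: real
  defines "x1 \<equiv> Xf p1 d1 t" and "x2 \<equiv> Xf p2 d2 t" and "x3 \<equiv> Xf p3 d3 t"
  assumes tr: "tri x1 x2 x3"
  shows "((\<lambda>\<tau>. Ang (p1+\<tau>*d1) (p2+\<tau>*d2) (p3+\<tau>*d3)) has_real_derivative
     (- (((d2-d3)*(x2\<^sup>2-x3\<^sup>2) + x1\<^sup>2*(d2+d3-2*d1))/2) / sqrt (QQ (x1\<^sup>2) (x2\<^sup>2) (x3\<^sup>2)))) (at t)"
proof -
  define c where "c \<tau> = ((Xf p2 d2 \<tau>)\<^sup>2 + (Xf p3 d3 \<tau>)\<^sup>2 - (Xf p1 d1 \<tau>)\<^sup>2) / (2 * Xf p2 d2 \<tau> * Xf p3 d3 \<tau>)" for \<tau>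
  define N where "N = ((d2-d3)*(x2\<^sup>2-x3\<^sup>2) + x1\<^sup>2*(d2+d3-2*d1))/2"
  define Q where "Q = QQ (x1\<^sup>2) (x2\<^sup>2) (x3\<^sup>2)"
  have x1: "x1 > 0" and x2: "x2 > 0" and x3: "x3 > 0" unfolding x1_def x2_def x3_def by (simp_all add: Xf_pos)
  have Q: "Q > 0" unfolding Q_def using QQ_pos[OF tr] .
  have dc: "(c has_real_derivative (N/(2*x2*x3))) (at t)"
    unfolding c_def[abs_def] N_def x1_def x2_def x3_def
    apply (rule derivative_eq_intros Xf_deriv refl)+
    using Xf_pos[of p2 d2 t] Xf_pos[of p3 d3 t]
    apply (simp_all add: field_simps power2_eq_square)
    done
  have ct: "c t = (x2\<^sup>2 + x3\<^sup>2 - x1\<^sup>2) / (2 * x2 * x3)" unfolding c_def x1_def x2_def x3_def ..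
  have 1: "1 - (c t)\<^sup>2 = Q / (2*x2*x3)\<^sup>2"
  proof -
    have "1 - (c t)\<^sup>2 = ((2*x2*x3)\<^sup>2 - (x2\<^sup>2 + x3\<^sup>2 - x1\<^sup>2)\<^sup>2) / (2*x2*x3)\<^sup>2"
      unfolding ct by (rule one_minus_sq_div) (use x2 x3 in simp)
    also have "(2*x2*x3)\<^sup>2 - (x2\<^sup>2 + x3\<^sup>2 - x1\<^sup>2)\<^sup>2 = Q" unfolding Q_def QQ_def by algebra
    finally show ?thesis .
  qed
  have "Q / (2*x2*x3)\<^sup>2 > 0" using Q x2 x3 by simp
  hence "(c t)\<^sup>2 < 1" using 1 by linarith
  hence cb: "-1 < c t" "c t < 1" by (auto simp: abs_square_less_1 abs_less_iff)
  have sq: "sqrt (1 - (c t)\<^sup>2) = sqrt Q / (2*x2*x3)"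
    unfolding 1 real_sqrt_divide real_sqrt_abs using x2 x3 by simp
  have D: "((\<lambda>\<tau>. arccos (c \<tau>)) has_real_derivative (- N / sqrt Q)) (at t)"
  proof -
    have "((\<lambda>\<tau>. arccos (c \<tau>)) has_real_derivative (inverse (- sqrt (1 - (c t)\<^sup>2)) * (N/(2*x2*x3)))) (at t)"
      by (rule DERIV_chain2[OF DERIV_arccos[OF cb] dc])
    moreover have "inverse (- sqrt (1 - (c t)\<^sup>2)) * (N/(2*x2*x3)) = - N / sqrt Q"
      unfolding sq by (rule inv_aux) (use x2 x3 Q in simp_all)
    ultimately show ?thesis by simp
  qed
  show ?thesis
    unfolding N_def[symmetric] Q_def[symmetric]
  proof (rule has_field_derivative_transform_within_open[OF D open_tri])
    show "t \<in> {\<tau>. tri (Xf p1 d1 \<tau>) (Xf p2 d2 \<tau>) (Xf p3 d3 \<tau>)}" using tr unfolding x1_def x2_def x3_def by simp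
    fix \<tau> assume "\<tau> \<in> {\<tau>. tri (Xf p1 d1 \<tau>) (Xf p2 d2 \<tau>) (Xf p3 d3 \<tau>)}"
    hence "tri (Xf p1 d1 \<tau>) (Xf p2 d2 \<tau>) (Xf p3 d3 \<tau>)" by simp
    hence "\<not> Xf p1 d1 \<tau> \<ge> Xf p2 d2 \<tau> + Xf p3 d3 \<tau>" "\<not> (Xf p2 d2 \<tau> \<ge> Xf p1 d1 \<tau> + Xf p3 d3 \<tau> \<or> Xf p3 d3 \<tau> \<ge> Xf p1 d1 \<tau> + Xf p2 d2 \<tau>)"
      unfolding tri_def by auto
    thus "arccos (c \<tau>) = Ang (p1+\<tau>*d1) (p2+\<tau>*d2) (p3+\<tau>*d3)"
      unfolding Ang_def gen_angle_def c_def Xf_def by (simp only: if_False)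
  qed
qed


lemma key_identity:
  "2*y2*(-(d1*((d2-d3)*(y2-y3)+y1*(d2+d3-2*d1))+d2*((d1-d3)*(y1-y3)+y2*(d1+d3-2*d2))+d3*((d1-d2)*(y1-y2)+y3*(d1+d2-2*d3))))
   = (2*y2*(d2-d3) + (y1+y2-y3)*(d3-d1))\<^sup>2 + QQ y1 y2 y3 * (d3-d1)\<^sup>2"
  unfolding QQ_def by algebra

lemma key_poly:
  assumes "(y2::real) > 0" "QQ y1 y2 y3 \<ge> 0"
  shows "0 \<le> -(d1*((d2-d3)*(y2-y3)+y1*(d2+d3-2*d1))+d2*((d1-d3)*(y1-y3)+y2*(d1+d3-2*d2))+d3*((d1-d2)*(y1-y2)+y3*(d1+d2-2*d3)))"
proof -
  have "0 \<le> (2*y2*(d2-d3) + (y1+y2-y3)*(d3-d1))\<^sup>2 + QQ y1 y2 y3 * (d3-d1)\<^sup>2"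
    using assms by simp
  hence "0 \<le> 2*y2*(-(d1*((d2-d3)*(y2-y3)+y1*(d2+d3-2*d1))+d2*((d1-d3)*(y1-y3)+y2*(d1+d3-2*d2))+d3*((d1-d2)*(y1-y2)+y3*(d1+d2-2*d3))))"
    unfolding key_identity .
  thus ?thesis using assms(1) by (simp add: zero_le_mult_iff)
qed

lemma mono_by_local:
  fixes g :: "real \<Rightarrow> real"
  assumes ab: "a \<le> b" and cont: "continuous_on {a..b} g" and fin: "finite V"
    and DV: "\<And>\<tau>. \<tau> \<in> {a..b} \<Longrightarrow> \<tau> \<in> D \<Longrightarrow> g \<tau> \<in> V"
    and loc: "\<And>\<tau>. \<tau> \<in> {a..b} \<Longrightarrow> \<tau> \<notin> D \<Longrightarrow> \<exists>\<delta>>0. \<forall>u. \<tau> \<le> u \<and> u < \<tau> + \<delta> \<and> u \<le> b \<longrightarrow> g \<tau> \<le> g u"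
  shows "g a \<le> g b"
proof (rule ccontr)
  assume "\<not> g a \<le> g b"
  hence lt: "g b < g a" by simp
  have "infinite {g b<..<g a}" using lt by simp
  hence "\<not> {g b<..<g a} \<subseteq> V" using fin finite_subset by blast
  then obtain y where "y \<in> {g b<..<g a}" "y \<notin> V" by blast
  hence y: "g b < y" "y < g a" "y \<notin> V" by auto
  define S where "S = {a..b} \<inter> g -` {y..}"
  have clS: "closed S" unfolding S_def by (rule continuous_closed_preimage[OF cont]) auto
  have aS: "a \<in> S" unfolding S_def using ab y by auto
  have bdd: "bdd_above S" unfolding S_def by (rule bdd_aboveI[of _ b]) auto
  define c where "c = Sup S"
  have cS: "c \<in> S" unfolding c_def using closed_contains_Sup[OF _ bdd clS] aS by auto
  hence cab: "c \<in> {a..b}" and gc: "y \<le> g c" unfolding S_def by auto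
  have cb: "c < b" using cab gc y(1) by (metis atLeastAtMost_iff linorder_not_le order.not_eq_order_implies_strict order_less_le_trans)
  have after: "g u < y" if "c < u" "u \<le> b" for u
  proof (rule ccontr)
    assume "\<not> g u < y"
    hence "u \<in> S" unfolding S_def using that cab by auto
    hence "u \<le> c" unfolding c_def by (rule cSup_upper[OF _ bdd])
    thus False using that by simp
  qed
  have gcy: "g c = y"
  proof (rule ccontr)
    assume "g c \<noteq> y"
    hence gt: "g c - y > 0" using gc by simp
    from cont cab gt obtain d where d: "d > 0" "\<And>x'. x' \<in> {a..b} \<Longrightarrow> dist x' c < d \<Longrightarrow> dist (g x') (g c) < g c - y"
      unfolding continuous_on_iff by metis
    define u where "u = min (c + d/2) b"
    have u: "c < u" "u \<le> b" "u \<in> {a..b}" "dist u c < d" using d cb cab unfolding u_def dist_real_def by auto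
    have "dist (g u) (g c) < g c - y" using d(2)[OF u(3,4)] .
    hence "g u > y" unfolding dist_real_def by auto
    thus False using after[OF u(1,2)] by simp
  qed
  have "c \<notin> D" using DV[OF cab] gcy y(3) by auto
  then obtain \<delta> where \<delta>: "\<delta> > 0" "\<And>u. c \<le> u \<Longrightarrow> u < c + \<delta> \<Longrightarrow> u \<le> b \<Longrightarrow> g c \<le> g u"
    using loc[OF cab] by blast
  define u where "u = min (c + \<delta>/2) b"
  have u: "c < u" "u \<le> b" "u < c + \<delta>" using \<delta> cb unfolding u_def by auto
  have "g c \<le> g u" using \<delta>(2)[of u] u by simp
  thus False using after[OF u(1,2)] gcy by simp
qed

lemma continuous_Ang':
  assumes "continuous_on S f1" "continuous_on S f2" "continuous_on S f3"
  shows "continuous_on S (\<lambda>x. Ang (f1 x) (f2 x) (f3 x))"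
proof -
  have "continuous_on S (\<lambda>x. (f1 x, f2 x, f3 x))" using assms by (intro continuous_intros)
  from continuous_on_compose2[OF continuous_Ang this] show ?thesis by simp
qed

lemma gen_angle_degenerate:
  assumes pos: "x1 > 0" "x2 > 0" "x3 > 0" and nt: "\<not> tri x1 x2 x3"
  shows "(gen_angle x1 x2 x3, gen_angle x2 x1 x3, gen_angle x3 x1 x2) \<in> {(pi,0,0), (0,pi,0), (0,0,pi)}"
proof -
  from nt consider "x1 \<ge> x2 + x3" | "x2 \<ge> x1 + x3" | "x3 \<ge> x1 + x2" unfolding tri_def by linarith
  thus ?thesis
  proof cases
    case 1
    have "gen_angle x1 x2 x3 = pi" using 1 unfolding gen_angle_def by simp
    moreover have "gen_angle x2 x1 x3 = 0" using 1 pos unfolding gen_angle_def by auto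
    moreover have "gen_angle x3 x1 x2 = 0" using 1 pos unfolding gen_angle_def by auto
    ultimately show ?thesis by simp
  next
    case 2
    have "gen_angle x1 x2 x3 = 0" using 2 pos unfolding gen_angle_def by auto
    moreover have "gen_angle x2 x1 x3 = pi" using 2 unfolding gen_angle_def by simp
    moreover have "gen_angle x3 x1 x2 = 0" using 2 pos unfolding gen_angle_def by auto
    ultimately show ?thesis by simp
  next
    case 3
    have "gen_angle x1 x2 x3 = 0" using 3 pos unfolding gen_angle_def by auto
    moreover have "gen_angle x2 x1 x3 = 0" using 3 pos unfolding gen_angle_def by auto
    moreover have "gen_angle x3 x1 x2 = pi" using 3 unfolding gen_angle_def by simp
    ultimately show ?thesis by simp
  qed
qed

lemma tri_perm: "tri x1 x2 x3 \<Longrightarrow> tri x2 x1 x3" "tri x1 x2 x3 \<Longrightarrow> tri x3 x1 x2"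
  unfolding tri_def by auto

lemma sum3_div: "-(d1*A1+d2*A2+d3*A3)/(2 * sq) = (-(A1/2)/sq)*d1 + (-(A2/2)/sq)*d2 + (-(A3/2)/sq)*d3" for sq :: real
  by (cases "sq = 0") (simp_all add: field_simps)

lemma Ang_mono:
  "0 \<le> (Ang s1 s2 s3 - Ang t1 t2 t3)*(s1-t1) + (Ang s2 s1 s3 - Ang t2 t1 t3)*(s2-t2) + (Ang s3 s1 s2 - Ang t3 t1 t2)*(s3-t3)"
proof -
  define d1 where "d1 = s1 - t1"
  define d2 where "d2 = s2 - t2"
  define d3 where "d3 = s3 - t3"
  define g where "g \<tau> = Ang (t1+\<tau>*d1) (t2+\<tau>*d2) (t3+\<tau>*d3) * d1 + Ang (t2+\<tau>*d2) (t1+\<tau>*d1) (t3+\<tau>*d3) * d2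
     + Ang (t3+\<tau>*d3) (t1+\<tau>*d1) (t2+\<tau>*d2) * d3" for \<tau>
  define D where "D = {\<tau>. \<not> tri (Xf t1 d1 \<tau>) (Xf t2 d2 \<tau>) (Xf t3 d3 \<tau>)}"
  have "g 0 \<le> g 1"
  proof (rule mono_by_local[where g=g and a=0 and b=1 and V = "{pi*d1, pi*d2, pi*d3}" and D = D])
    show "continuous_on {0..1} g" unfolding g_def[abs_def]
      by (intro continuous_intros continuous_Ang')
    show "g \<tau> \<in> {pi*d1, pi*d2, pi*d3}" if "\<tau> \<in> D" for \<tau>
    proof -
      have "(gen_angle (Xf t1 d1 \<tau>) (Xf t2 d2 \<tau>) (Xf t3 d3 \<tau>), gen_angle (Xf t2 d2 \<tau>) (Xf t1 d1 \<tau>) (Xf t3 d3 \<tau>),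
             gen_angle (Xf t3 d3 \<tau>) (Xf t1 d1 \<tau>) (Xf t2 d2 \<tau>)) \<in> {(pi,0,0), (0,pi,0), (0,0,pi)}"
        using that unfolding D_def by (intro gen_angle_degenerate) (auto simp: Xf_pos)
      thus ?thesis unfolding g_def Ang_def Xf_def by auto
    qed
    show "\<exists>\<delta>>0. \<forall>u. \<tau> \<le> u \<and> u < \<tau> + \<delta> \<and> u \<le> 1 \<longrightarrow> g \<tau> \<le> g u" if "\<tau> \<notin> D" for \<tau>
    proof -
      let ?S = "{\<tau>. tri (Xf t1 d1 \<tau>) (Xf t2 d2 \<tau>) (Xf t3 d3 \<tau>)}"
      have tS: "\<tau> \<in> ?S" using that unfolding D_def by simp
      obtain \<delta> where \<delta>: "\<delta> > 0" "ball \<tau> \<delta> \<subseteq> ?S" using openE[OF open_tri tS] by blast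
      have deriv: "\<exists>y. DERIV g x :> y \<and> 0 \<le> y" if x: "x \<in> ?S" for x
      proof -
        define x1 where "x1 = Xf t1 d1 x"
        define x2 where "x2 = Xf t2 d2 x"
        define x3 where "x3 = Xf t3 d3 x"
        have tr: "tri x1 x2 x3" using x unfolding x1_def x2_def x3_def by simp
        define Q where "Q = QQ (x1\<^sup>2) (x2\<^sup>2) (x3\<^sup>2)"
        have Q2: "QQ (x2\<^sup>2) (x1\<^sup>2) (x3\<^sup>2) = Q" "QQ (x3\<^sup>2) (x1\<^sup>2) (x2\<^sup>2) = Q" unfolding Q_def QQ_def by (simp_all add: algebra_simps)
        have D1: "((\<lambda>\<tau>. Ang (t1+\<tau>*d1) (t2+\<tau>*d2) (t3+\<tau>*d3)) has_real_derivative
            (- (((d2-d3)*(x2\<^sup>2-x3\<^sup>2) + x1\<^sup>2*(d2+d3-2*d1))/2) / sqrt Q)) (at x)"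
          unfolding Q_def x1_def x2_def x3_def by (rule Ang_deriv) (use tr in \<open>simp add: x1_def x2_def x3_def\<close>)
        have D2: "((\<lambda>\<tau>. Ang (t2+\<tau>*d2) (t1+\<tau>*d1) (t3+\<tau>*d3)) has_real_derivative
            (- (((d1-d3)*(x1\<^sup>2-x3\<^sup>2) + x2\<^sup>2*(d1+d3-2*d2))/2) / sqrt Q)) (at x)"
          unfolding Q2(1)[symmetric] x1_def x2_def x3_def by (rule Ang_deriv) (use tri_perm(1)[OF tr] in \<open>simp add: x1_def x2_def x3_def\<close>)
        have D3: "((\<lambda>\<tau>. Ang (t3+\<tau>*d3) (t1+\<tau>*d1) (t2+\<tau>*d2)) has_real_derivative
            (- (((d1-d2)*(x1\<^sup>2-x2\<^sup>2) + x3\<^sup>2*(d1+d2-2*d3))/2) / sqrt Q)) (at x)"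
          unfolding Q2(2)[symmetric] x1_def x2_def x3_def by (rule Ang_deriv) (use tri_perm(2)[OF tr] in \<open>simp add: x1_def x2_def x3_def\<close>)
        have DG: "DERIV g x :> (- (((d2-d3)*(x2\<^sup>2-x3\<^sup>2) + x1\<^sup>2*(d2+d3-2*d1))/2) / sqrt Q) * d1
              + (- (((d1-d3)*(x1\<^sup>2-x3\<^sup>2) + x2\<^sup>2*(d1+d3-2*d2))/2) / sqrt Q) * d2
              + (- (((d1-d2)*(x1\<^sup>2-x2\<^sup>2) + x3\<^sup>2*(d1+d2-2*d3))/2) / sqrt Q) * d3"
          unfolding g_def[abs_def]
          by (intro DERIV_add DERIV_cmult_right D1 D2 D3)
        have "0 \<le> -(d1*((d2-d3)*(x2\<^sup>2-x3\<^sup>2)+x1\<^sup>2*(d2+d3-2*d1))+d2*((d1-d3)*(x1\<^sup>2-x3\<^sup>2)+x2\<^sup>2*(d1+d3-2*d2))+d3*((d1-d2)*(x1\<^sup>2-x2\<^sup>2)+x3\<^sup>2*(d1+d2-2*d3)))"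
          (is "0 \<le> ?P")
          apply (rule key_poly)
          using QQ_pos[OF tr] Xf_pos[of t2 d2 x] by (auto simp: x2_def)
        hence "0 \<le> ?P / (2 * sqrt Q)" by (rule divide_nonneg_nonneg) (use QQ_pos[OF tr] in \<open>simp add: Q_def\<close>)
        also have "?P / (2 * sqrt Q) = (- (((d2-d3)*(x2\<^sup>2-x3\<^sup>2) + x1\<^sup>2*(d2+d3-2*d1))/2) / sqrt Q) * d1
              + (- (((d1-d3)*(x1\<^sup>2-x3\<^sup>2) + x2\<^sup>2*(d1+d3-2*d2))/2) / sqrt Q) * d2
              + (- (((d1-d2)*(x1\<^sup>2-x2\<^sup>2) + x3\<^sup>2*(d1+d2-2*d3))/2) / sqrt Q) * d3"
          by (rule sum3_div)
        finally show ?thesis using DG by blast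
      qed
      show ?thesis
      proof (intro exI[of _ \<delta>] conjI allI impI)
        show "\<delta> > 0" by fact
        fix u assume u: "\<tau> \<le> u \<and> u < \<tau> + \<delta> \<and> u \<le> 1"
        show "g \<tau> \<le> g u"
        proof (rule DERIV_nonneg_imp_nondecreasing[where f=g])
          show "\<tau> \<le> u" using u by simp
          fix x assume "\<tau> \<le> x" "x \<le> u"
          hence "x \<in> ball \<tau> \<delta>" using u unfolding ball_def dist_real_def by auto
          hence "x \<in> ?S" using \<delta> by blast
          thus "\<exists>y. DERIV g x :> y \<and> 0 \<le> y" by (rule deriv)
        qed
      qed
    qed
  qed (simp_all)
  moreover have g1: "g 1 = Ang s1 s2 s3 * d1 + Ang s2 s1 s3 * d2 + Ang s3 s1 s2 * d3"
    by (simp add: g_def d1_def d2_def d3_def)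
  moreover have g0: "g 0 = Ang t1 t2 t3 * d1 + Ang t2 t1 t3 * d2 + Ang t3 t1 t2 * d3"
    by (simp add: g_def)
  moreover have "(Ang s1 s2 s3 - Ang t1 t2 t3)*(s1-t1) + (Ang s2 s1 s3 - Ang t2 t1 t3)*(s2-t2) + (Ang s3 s1 s2 - Ang t3 t1 t2)*(s3-t3)
     = (Ang s1 s2 s3 * d1 + Ang s2 s1 s3 * d2 + Ang s3 s1 s2 * d3) - (Ang t1 t2 t3 * d1 + Ang t2 t1 t3 * d2 + Ang t3 t1 t2 * d3)"
    unfolding d1_def d2_def d3_def by (simp add: algebra_simps)
  ultimately show ?thesis by linarith
qed

lemma dist_triple_le: "dist (a::real, b::real, c::real) (a', b', c') \<le> \<bar>a - a'\<bar> + \<bar>b - b'\<bar> + \<bar>c - c'\<bar>"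
proof -
  have "dist (a, b, c) (a', b', c') = norm (a - a', b - b', c - c')" by (simp add: dist_norm)
  also have "\<dots> \<le> norm (a - a') + norm (b - b', c - c')" by (rule norm_Pair_le)
  also have "norm (b - b', c - c') \<le> norm (b - b') + norm (c - c')" by (rule norm_Pair_le)
  finally show ?thesis by simp
qed

lemma Ang_uc:
  assumes "(\<epsilon>::real) > 0"
  shows "\<exists>\<delta>>0. \<forall>a b c a' b' c'. \<bar>a\<bar> \<le> R \<and> \<bar>b\<bar> \<le> R \<and> \<bar>c\<bar> \<le> R \<and> \<bar>a'\<bar> \<le> R \<and> \<bar>b'\<bar> \<le> R \<and> \<bar>c'\<bar> \<le> R
      \<and> \<bar>a - a'\<bar> \<le> \<delta> \<and> \<bar>b - b'\<bar> \<le> \<delta> \<and> \<bar>c - c'\<bar> \<le> \<delta> \<longrightarrow> \<bar>Ang a b c - Ang a' b' c'\<bar> \<le> \<epsilon>"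
proof -
  let ?K = "{-R..R} \<times> {-R..R} \<times> {-R..R}"
  let ?f = "\<lambda>s::real\<times>real\<times>real. Ang (fst s) (fst (snd s)) (snd (snd s))"
  have "compact ?K" by (intro compact_Times compact_Icc)
  moreover have "continuous_on ?K ?f" using continuous_Ang by (rule continuous_on_subset) simp
  ultimately have "uniformly_continuous_on ?K ?f" by (intro compact_uniformly_continuous)
  then obtain d where d: "d > 0" "\<And>x x'. x \<in> ?K \<Longrightarrow> x' \<in> ?K \<Longrightarrow> dist x' x < d \<Longrightarrow> dist (?f x') (?f x) < \<epsilon>"
    unfolding uniformly_continuous_on_def using assms by metis
  show ?thesis
  proof (intro exI[of _ "d/4"] conjI allI impI)
    show "d/4 > 0" using d by simp
    fix a b c a' b' c' :: real
    assume H: "\<bar>a\<bar> \<le> R \<and> \<bar>b\<bar> \<le> R \<and> \<bar>c\<bar> \<le> R \<and> \<bar>a'\<bar> \<le> R \<and> \<bar>b'\<bar> \<le> R \<and> \<bar>c'\<bar> \<le> R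
      \<and> \<bar>a - a'\<bar> \<le> d/4 \<and> \<bar>b - b'\<bar> \<le> d/4 \<and> \<bar>c - c'\<bar> \<le> d/4"
    have K: "(a, b, c) \<in> ?K" "(a', b', c') \<in> ?K" using H by auto
    have "dist (a, b, c) (a', b', c') < d" using dist_triple_le[of a b c a' b' c'] H d by linarith
    from d(2)[OF K(2) K(1) this] show "\<bar>Ang a b c - Ang a' b' c'\<bar> \<le> \<epsilon>" by (simp add: dist_real_def)
  qed
qed



locale odeset =
  fixes E :: "'e set" and F :: "('e \<Rightarrow> real) \<Rightarrow> 'e \<Rightarrow> real" and B :: real and x0 :: "'e \<Rightarrow> real"
  assumes finE: "finite E"
    and Bpos: "B > 0"
    and bnd: "\<And>x e. e \<in> E \<Longrightarrow> \<bar>F x e\<bar> \<le> B"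
    and uc: "\<And>R \<epsilon>. \<epsilon> > 0 \<Longrightarrow> \<exists>\<delta>>0. \<forall>x y. (\<forall>e\<in>E. \<bar>x e\<bar> \<le> R \<and> \<bar>y e\<bar> \<le> R \<and> \<bar>x e - y e\<bar> \<le> \<delta>)
                 \<longrightarrow> (\<forall>e\<in>E. \<bar>F x e - F y e\<bar> \<le> \<epsilon>)"
    and diss: "\<And>x y. (\<Sum>e\<in>E. (F x e - F y e) * (x e - y e)) \<le> 0"
begin

definition hh :: "nat \<Rightarrow> real" where "hh n = 1 / (real n + 1)"
definition kk :: "nat \<Rightarrow> real \<Rightarrow> nat" where "kk n t = nat \<lfloor>t * (real n + 1)\<rfloor>"

primrec pp :: "nat \<Rightarrow> nat \<Rightarrow> 'e \<Rightarrow> real" where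
  "pp n 0 = x0"
| "pp n (Suc k) = (\<lambda>e. pp n k e + hh n * F (pp n k) e)"

definition xn :: "nat \<Rightarrow> real \<Rightarrow> 'e \<Rightarrow> real" where
  "xn n t e = pp n (kk n t) e + (t - real (kk n t) * hh n) * F (pp n (kk n t)) e"

lemma hh_pos: "hh n > 0" unfolding hh_def by simp

lemma kk_bounds:
  assumes "t \<ge> 0"
  shows "real (kk n t) \<le> t * (real n + 1)" "t * (real n + 1) < real (kk n t) + 1"
proof -
  have "0 \<le> t * (real n + 1)" using assms by simp
  hence fl: "0 \<le> \<lfloor>t * (real n + 1)\<rfloor>" by simp
  have r: "real (kk n t) = of_int \<lfloor>t * (real n + 1)\<rfloor>" unfolding kk_def using fl by simp
  show "real (kk n t) \<le> t * (real n + 1)" unfolding r by (rule of_int_floor_le)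
  show "t * (real n + 1) < real (kk n t) + 1" unfolding r by (rule real_of_int_floor_add_one_gt)
qed

lemma kk_bounds_h:
  assumes "t \<ge> 0"
  shows "real (kk n t) * hh n \<le> t" "t < (real (kk n t) + 1) * hh n"
  using kk_bounds[OF assms, of n] unfolding hh_def by (simp_all add: field_simps)

lemma kk_eq:
  assumes "real k \<le> s * (real n + 1)" "s * (real n + 1) < real k + 1"
  shows "kk n s = k"
proof -
  have "\<lfloor>s * (real n + 1)\<rfloor> = int k" by (rule floor_unique) (use assms in auto)
  thus ?thesis unfolding kk_def by simp
qed

lemma kk_eq_h:
  assumes "real k * hh n \<le> s" "s < (real k + 1) * hh n"
  shows "kk n s = k"
  by (rule kk_eq) (use assms in \<open>simp_all add: hh_def field_simps\<close>)

lemma kk_0: "kk n 0 = 0" unfolding kk_def by simp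

lemma pp_bound: "e \<in> E \<Longrightarrow> \<bar>pp n k e - x0 e\<bar> \<le> B * real k * hh n"
proof (induction k)
  case 0 thus ?case by simp
next
  case (Suc k)
  have "\<bar>hh n * F (pp n k) e\<bar> \<le> hh n * B" using bnd[OF Suc.prems] hh_pos[of n]
    by (simp add: abs_mult mult_left_mono)
  thus ?case using Suc by (simp add: algebra_simps)
qed

lemma xn_0: "xn n 0 e = x0 e" unfolding xn_def kk_0 by simp

lemma xn_near:
  assumes "t \<ge> 0" "e \<in> E"
  shows "\<bar>xn n t e - pp n (kk n t) e\<bar> \<le> B * hh n"
proof -
  have a: "0 \<le> t - real (kk n t) * hh n" "t - real (kk n t) * hh n \<le> hh n"
    using kk_bounds_h[OF assms(1), of n] by (simp_all add: algebra_simps)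
  have "\<bar>(t - real (kk n t) * hh n) * F (pp n (kk n t)) e\<bar> \<le> hh n * B"
    unfolding abs_mult using a bnd[OF assms(2)] by (intro mult_mono) auto
  thus ?thesis unfolding xn_def by (simp add: mult.commute)
qed

lemma pp_kk_bound:
  assumes "t \<ge> 0" "e \<in> E"
  shows "\<bar>pp n (kk n t) e - x0 e\<bar> \<le> B * t"
proof -
  have "B * real (kk n t) * hh n \<le> B * t" using kk_bounds_h(1)[OF assms(1), of n] Bpos
    by (simp add: mult.assoc)
  thus ?thesis using pp_bound[OF assms(2), of n "kk n t"] by linarith
qed

lemma xn_x0:
  assumes "t \<ge> 0" "e \<in> E"
  shows "\<bar>xn n t e - x0 e\<bar> \<le> B * t"
proof -
  have a: "0 \<le> t - real (kk n t) * hh n"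
    using kk_bounds_h[OF assms(1), of n] by (simp_all add: algebra_simps)
  have "\<bar>(t - real (kk n t) * hh n) * F (pp n (kk n t)) e\<bar> \<le> (t - real (kk n t) * hh n) * B"
    unfolding abs_mult using a bnd[OF assms(2)] by (intro mult_mono) auto
  moreover have "B * real (kk n t) * hh n + (t - real (kk n t) * hh n) * B = B * t" by (simp add: algebra_simps)
  ultimately show ?thesis using pp_bound[OF assms(2), of n "kk n t"] unfolding xn_def by linarith
qed


lemma pp_cells:
  "((\<lambda>s. F (pp n (kk n s)) e) has_integral (pp n k e - x0 e)) {0..real k * hh n}"
proof (induction k)
  case 0
  show ?case using has_integral_refl(2)[of "\<lambda>s. F (pp n (kk n s)) e" 0] by simp
next
  case (Suc k)
  let ?g = "\<lambda>s. F (pp n (kk n s)) e"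
  have c: "((\<lambda>s. F (pp n k) e) has_integral (hh n * F (pp n k) e)) {real k * hh n..real (Suc k) * hh n}"
    using has_integral_const_real[of "F (pp n k) e" "real k * hh n" "real (Suc k) * hh n"] hh_pos[of n]
    by (simp add: algebra_simps)
  have "(?g has_integral (hh n * F (pp n k) e)) {real k * hh n..real (Suc k) * hh n}"
  proof (rule has_integral_spike_finite[OF _ _ c])
    show "finite {real (Suc k) * hh n}" by simp
    fix s assume "s \<in> {real k * hh n..real (Suc k) * hh n} - {real (Suc k) * hh n}"
    hence "real k * hh n \<le> s" "s < (real k + 1) * hh n" by (auto simp: algebra_simps)
    hence "kk n s = k" by (rule kk_eq_h)
    thus "?g s = F (pp n k) e" by simp
  qed
  from has_integral_combine[OF _ _ Suc.IH this]
  show ?case using hh_pos[of n] by (simp add: algebra_simps)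
qed

lemma xn_integral:
  assumes "t \<ge> 0"
  shows "((\<lambda>s. F (pp n (kk n s)) e) has_integral (xn n t e - x0 e)) {0..t}"
proof -
  let ?g = "\<lambda>s. F (pp n (kk n s)) e"
  let ?k = "kk n t"
  have b: "real ?k * hh n \<le> t" "t < (real ?k + 1) * hh n" using kk_bounds_h[OF assms] by auto
  have c: "((\<lambda>s. F (pp n ?k) e) has_integral ((t - real ?k * hh n) * F (pp n ?k) e)) {real ?k * hh n..t}"
    using has_integral_const_real[of "F (pp n ?k) e" "real ?k * hh n" t] b by simp
  have "(?g has_integral ((t - real ?k * hh n) * F (pp n ?k) e)) {real ?k * hh n..t}"
  proof (rule has_integral_spike_finite[OF _ _ c])
    show "finite {}" by simp
    fix s assume "s \<in> {real ?k * hh n..t} - {}"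
    hence "real ?k * hh n \<le> s" "s < (real ?k + 1) * hh n" using b by auto
    hence "kk n s = ?k" by (rule kk_eq_h)
    thus "?g s = F (pp n ?k) e" by simp
  qed
  from has_integral_combine[OF _ b(1) pp_cells this]
  show ?thesis unfolding xn_def by (simp add: algebra_simps hh_pos less_imp_le)
qed

lemma xn_eq_integral:
  assumes "t \<ge> 0"
  shows "xn n t e = x0 e + integral {0..t} (\<lambda>s. F (pp n (kk n s)) e)"
  using integral_unique[OF xn_integral[OF assms]] by simp

lemma xn_cont: "continuous_on {0..T} (\<lambda>t. xn n t e)"
proof (cases "T \<ge> 0")
  case True
  have "(\<lambda>s. F (pp n (kk n s)) e) integrable_on {0..T}" using xn_integral[OF True] by blast
  hence "continuous_on {0..T} (\<lambda>t. x0 e + integral {0..t} (\<lambda>s. F (pp n (kk n s)) e))"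
    by (intro continuous_intros indefinite_integral_continuous_1)
  thus ?thesis by (rule continuous_on_eq) (simp add: xn_eq_integral)
next
  case False
  hence "{0..T} = {}" by simp
  thus ?thesis by simp
qed

lemma xn_deriv:
  assumes "t \<ge> 0" "real (kk n t) \<noteq> t * (real n + 1)"
  shows "((\<lambda>s. xn n s e) has_real_derivative F (pp n (kk n t)) e) (at t)"
proof -
  let ?k = "kk n t"
  have b: "real ?k < t * (real n + 1)" "t * (real n + 1) < real ?k + 1"
    using kk_bounds[OF assms(1), of n] assms(2) by auto
  let ?U = "{s. real ?k < s * (real n + 1) \<and> s * (real n + 1) < real ?k + 1}"
  have U: "open ?U" by (intro open_Collect_conj open_Collect_less continuous_intros)
  have D: "((\<lambda>s. pp n ?k e + (s - real ?k * hh n) * F (pp n ?k) e) has_real_derivative F (pp n ?k) e) (at t)"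
    by (rule derivative_eq_intros refl)+ simp
  show ?thesis
  proof (rule has_field_derivative_transform_within_open[OF D U])
    show "t \<in> ?U" using b by simp
    fix s assume "s \<in> ?U"
    hence "kk n s = ?k" by (intro kk_eq) auto
    thus "pp n ?k e + (s - real ?k * hh n) * F (pp n ?k) e = xn n s e" unfolding xn_def by simp
  qed
qed


lemma grid_finite: "finite {t \<in> {0..T}. real (kk n t) = t * (real n + 1)}"
proof (rule finite_subset)
  show "{t \<in> {0..T}. real (kk n t) = t * (real n + 1)} \<subseteq> (\<lambda>k. real k * hh n) ` {..nat \<lceil>T * (real n + 1)\<rceil>}"
  proof
    fix t assume t: "t \<in> {t \<in> {0..T}. real (kk n t) = t * (real n + 1)}"
    hence tt: "t = real (kk n t) * hh n" unfolding hh_def by (simp add: field_simps)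
    have "real (kk n t) \<le> T * (real n + 1)" using t by (auto intro: mult_right_mono)
    hence "kk n t \<le> nat \<lceil>T * (real n + 1)\<rceil>" by linarith
    thus "t \<in> (\<lambda>k. real k * hh n) ` {..nat \<lceil>T * (real n + 1)\<rceil>}" using tt by auto
  qed
qed simp

lemma sq_bound_abs: "(a::real)\<^sup>2 \<le> \<epsilon>\<^sup>2 \<Longrightarrow> 0 \<le> \<epsilon> \<Longrightarrow> \<bar>a\<bar> \<le> \<epsilon>"
  using power2_le_imp_le[of "\<bar>a\<bar>" \<epsilon>] by simp

lemma deriv_sq_diff:
  assumes "(f has_real_derivative f') (at x)" "(g has_real_derivative g') (at x)"
  shows "((\<lambda>t. (f t - g t)\<^sup>2) has_real_derivative (2 * (f x - g x) * (f' - g'))) (at x)"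
  using assms by (auto intro!: derivative_eq_intros simp: algebra_simps)

lemma cauchy_est:
  assumes T: "T > 0" and \<epsilon>: "\<epsilon> > 0"
  shows "\<exists>N. \<forall>n\<ge>N. \<forall>m\<ge>N. \<forall>t\<in>{0..T}. \<forall>e\<in>E. \<bar>xn n t e - xn m t e\<bar> \<le> \<epsilon>"
proof -
  define R where "R = (\<Sum>e\<in>E. \<bar>x0 e\<bar>) + B * T"
  define C where "C = real (card E)"
  define \<epsilon>1 where "\<epsilon>1 = \<epsilon>\<^sup>2 / (8 * C * B * T * T + 1)"
  have C0: "C \<ge> 0" unfolding C_def by simp
  have "0 \<le> 8 * C * B * T * T" using C0 Bpos T by simp
  hence den: "8 * C * B * T * T + 1 > 0" by linarith
  have \<epsilon>1: "\<epsilon>1 > 0" unfolding \<epsilon>1_def using \<epsilon> den by simp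
  obtain \<delta> where \<delta>: "\<delta> > 0" and uc\<delta>: "\<And>x y. (\<forall>e\<in>E. \<bar>x e\<bar> \<le> R \<and> \<bar>y e\<bar> \<le> R \<and> \<bar>x e - y e\<bar> \<le> \<delta>)
                 \<Longrightarrow> (\<forall>e\<in>E. \<bar>F x e - F y e\<bar> \<le> \<epsilon>1)"
    using uc[OF \<epsilon>1, of R] by blast
  define N where "N = nat \<lceil>B / \<delta>\<rceil>"
  have hN: "B * hh n \<le> \<delta>" if "n \<ge> N" for n
  proof -
    have "B / \<delta> \<le> real n + 1" using that unfolding N_def by linarith
    hence "B \<le> \<delta> * (real n + 1)" using \<delta> by (simp add: divide_le_eq mult.commute)
    thus ?thesis unfolding hh_def using \<delta> by (simp add: divide_le_eq mult.commute)
  qed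
  have x0R: "\<bar>x0 e\<bar> \<le> (\<Sum>e\<in>E. \<bar>x0 e\<bar>)" if "e \<in> E" for e
    using member_le_sum[of e E "\<lambda>e. \<bar>x0 e\<bar>"] that finE by simp
  have xnR: "\<bar>xn n t e\<bar> \<le> R" if "t \<in> {0..T}" "e \<in> E" for n t e
  proof -
    have "B * t \<le> B * T" using that Bpos by simp
    thus ?thesis using xn_x0[of t e n] x0R[OF that(2)] that unfolding R_def by auto
  qed
  have ppR: "\<bar>pp n (kk n t) e\<bar> \<le> R" if "t \<in> {0..T}" "e \<in> E" for n t e
  proof -
    have "B * t \<le> B * T" using that Bpos by simp
    thus ?thesis using pp_kk_bound[of t e n] x0R[OF that(2)] that unfolding R_def by auto
  qed
  have diffB: "\<bar>xn n t e - xn m t e\<bar> \<le> 2 * B * T" if "t \<in> {0..T}" "e \<in> E" for n m t e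
  proof -
    have "B * t \<le> B * T" using that Bpos by simp
    thus ?thesis using xn_x0[of t e n] xn_x0[of t e m] that by auto
  qed
  have Fclose: "\<bar>F (pp n (kk n t)) e - F (xn n t) e\<bar> \<le> \<epsilon>1" if "n \<ge> N" "t \<in> {0..T}" "e \<in> E" for n t e
  proof -
    have "\<forall>e\<in>E. \<bar>pp n (kk n t) e\<bar> \<le> R \<and> \<bar>xn n t e\<bar> \<le> R \<and> \<bar>pp n (kk n t) e - xn n t e\<bar> \<le> \<delta>"
    proof
      fix e assume e: "e \<in> E"
      have "\<bar>pp n (kk n t) e - xn n t e\<bar> \<le> B * hh n" using xn_near[of t e n] that e by simp
      thus "\<bar>pp n (kk n t) e\<bar> \<le> R \<and> \<bar>xn n t e\<bar> \<le> R \<and> \<bar>pp n (kk n t) e - xn n t e\<bar> \<le> \<delta>"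
        using hN[OF that(1)] ppR[OF that(2) e] xnR[OF that(2) e] by simp
    qed
    from uc\<delta>[OF this] that(3) show ?thesis by blast
  qed
  define K where "K = 8 * C * B * T * \<epsilon>1"
  have K0: "K \<ge> 0" unfolding K_def using C0 Bpos T \<epsilon>1 by simp
  show ?thesis
  proof (intro exI[of _ N] allI impI ballI)
    fix n m t0 e0 assume n: "n \<ge> N" and m: "m \<ge> N" and t0: "t0 \<in> {0..T}" and e0: "e0 \<in> E"
    define \<phi> where "\<phi> t = (\<Sum>e\<in>E. (xn n t e - xn m t e)\<^sup>2)" for t
    define S where "S = {t \<in> {0..t0}. real (kk n t) = t * (real n + 1)} \<union> {t \<in> {0..t0}. real (kk m t) = t * (real m + 1)}"
    define \<phi>' where "\<phi>' t = (if t \<in> S then 0 else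
        (\<Sum>e\<in>E. 2 * (xn n t e - xn m t e) * (F (pp n (kk n t)) e - F (pp m (kk m t)) e)))" for t
    have t00: "0 \<le> t0" "t0 \<le> T" using t0 by auto
    have "(\<phi>' has_integral (\<phi> t0 - \<phi> 0)) {0..t0}"
    proof (rule fundamental_theorem_of_calculus_strong)
      show "finite S" unfolding S_def using grid_finite by blast
      show "0 \<le> t0" by fact
      show "continuous_on {0..t0} \<phi>" unfolding \<phi>_def[abs_def]
        by (intro continuous_intros xn_cont)
      fix x assume x: "x \<in> {0..t0} - S"
      hence x0: "x \<ge> 0" and xn: "real (kk n x) \<noteq> x * (real n + 1)" and xm: "real (kk m x) \<noteq> x * (real m + 1)"
        unfolding S_def by auto
      have "(\<phi> has_real_derivative (\<Sum>e\<in>E. 2 * (xn n x e - xn m x e) * (F (pp n (kk n x)) e - F (pp m (kk m x)) e))) (at x)"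
        unfolding \<phi>_def[abs_def]
        by (intro DERIV_sum deriv_sq_diff xn_deriv x0 xn xm)
      moreover have "\<phi>' x = (\<Sum>e\<in>E. 2 * (xn n x e - xn m x e) * (F (pp n (kk n x)) e - F (pp m (kk m x)) e))"
        unfolding \<phi>'_def using x by simp
      ultimately show "(\<phi> has_vector_derivative \<phi>' x) (at x)"
        by (simp add: has_real_derivative_iff_has_vector_derivative)
    qed
    moreover have "((\<lambda>_. K) has_integral (K * t0)) {0..t0}"
      using has_integral_const_real[of K 0 t0] t00 by (simp add: mult.commute)
    moreover have "\<phi>' x \<le> K" if x: "x \<in> {0..t0}" for x
    proof (cases "x \<in> S")
      case True thus ?thesis unfolding \<phi>'_def using K0 by simp
    next
      case False
      have xT: "x \<in> {0..T}" using x t00 by auto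
      let ?u = "xn n x" and ?v = "xn m x" and ?a = "pp n (kk n x)" and ?b = "pp m (kk m x)"
      have split: "(\<Sum>e\<in>E. 2 * (?u e - ?v e) * (F ?a e - F ?b e))
         = 2 * (\<Sum>e\<in>E. (?u e - ?v e) * (F ?a e - F ?u e)) + 2 * (\<Sum>e\<in>E. (F ?u e - F ?v e) * (?u e - ?v e))
           + 2 * (\<Sum>e\<in>E. (?u e - ?v e) * (F ?v e - F ?b e))"
        by (simp add: sum_distrib_left sum.distrib[symmetric] algebra_simps)
      have t1: "(\<Sum>e\<in>E. (?u e - ?v e) * (F ?a e - F ?u e)) \<le> (\<Sum>e\<in>E. 2 * B * T * \<epsilon>1)"
      proof (rule sum_mono)
        fix e assume e: "e \<in> E"
        have "(?u e - ?v e) * (F ?a e - F ?u e) \<le> \<bar>?u e - ?v e\<bar> * \<bar>F ?a e - F ?u e\<bar>"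
          by (metis abs_ge_self abs_mult)
        also have "\<dots> \<le> (2 * B * T) * \<epsilon>1"
          using diffB[OF xT e, where n=n and m=m] Fclose[OF n xT e] Bpos T by (intro mult_mono) auto
        finally show "(?u e - ?v e) * (F ?a e - F ?u e) \<le> 2 * B * T * \<epsilon>1" .
      qed
      have t3: "(\<Sum>e\<in>E. (?u e - ?v e) * (F ?v e - F ?b e)) \<le> (\<Sum>e\<in>E. 2 * B * T * \<epsilon>1)"
      proof (rule sum_mono)
        fix e assume e: "e \<in> E"
        have "(?u e - ?v e) * (F ?v e - F ?b e) \<le> \<bar>?u e - ?v e\<bar> * \<bar>F ?b e - F ?v e\<bar>"
          by (metis abs_ge_self abs_minus_commute abs_mult)
        also have "\<dots> \<le> (2 * B * T) * \<epsilon>1"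
          using diffB[OF xT e, where n=n and m=m] Fclose[OF m xT e] Bpos T by (intro mult_mono) auto
        finally show "(?u e - ?v e) * (F ?v e - F ?b e) \<le> 2 * B * T * \<epsilon>1" .
      qed
      have t2: "(\<Sum>e\<in>E. (F ?u e - F ?v e) * (?u e - ?v e)) \<le> 0" by (rule diss)
      have cs: "(\<Sum>e\<in>E. 2 * B * T * \<epsilon>1) = C * (2 * B * T * \<epsilon>1)" unfolding C_def by simp
      have KK: "K = 4 * (C * (2 * B * T * \<epsilon>1))" unfolding K_def by simp
      have "(\<Sum>e\<in>E. 2 * (?u e - ?v e) * (F ?a e - F ?b e)) \<le> K"
        unfolding split KK using t1 t2 t3 unfolding cs by linarith
      thus ?thesis unfolding \<phi>'_def using False by simp
    qed
    ultimately have "\<phi> t0 - \<phi> 0 \<le> K * t0" by (rule has_integral_le)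
    moreover have "\<phi> 0 = 0" unfolding \<phi>_def by (simp add: xn_0)
    moreover have "K * t0 \<le> \<epsilon>\<^sup>2"
    proof -
      have "K * t0 \<le> K * T" using K0 t00 by (simp add: mult_left_mono)
      also have "K * T = (8 * C * B * T * T) * \<epsilon>1" unfolding K_def by simp
      also have "\<dots> \<le> (8 * C * B * T * T + 1) * \<epsilon>1" using \<epsilon>1 by simp
      also have "\<dots> = \<epsilon>\<^sup>2" unfolding \<epsilon>1_def using den by simp
      finally show ?thesis .
    qed
    moreover have "(xn n t0 e0 - xn m t0 e0)\<^sup>2 \<le> \<phi> t0"
      unfolding \<phi>_def using member_le_sum[of e0 E "\<lambda>e. (xn n t0 e - xn m t0 e)\<^sup>2"] e0 finE by simp
    ultimately have "(xn n t0 e0 - xn m t0 e0)\<^sup>2 \<le> \<epsilon>\<^sup>2" by linarith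
    thus "\<bar>xn n t0 e0 - xn m t0 e0\<bar> \<le> \<epsilon>" using \<epsilon> by (intro sq_bound_abs) auto
  qed
qed


end

context odeset begin
definition xl :: "real \<Rightarrow> 'e \<Rightarrow> real" where "xl t e = lim (\<lambda>n. xn n t e)"

lemma xn_conv:
  assumes "t \<ge> 0" "e \<in> E"
  shows "(\<lambda>n. xn n t e) \<longlonglongrightarrow> xl t e"
proof -
  have "Cauchy (\<lambda>n. xn n t e)"
  proof (rule metric_CauchyI)
    fix \<epsilon> :: real assume "\<epsilon> > 0"
    hence h: "\<epsilon>/2 > 0" by simp
    have t1: "t + 1 > 0" using assms by simp
    obtain N where N: "\<forall>n\<ge>N. \<forall>m\<ge>N. \<forall>s\<in>{0..t+1}. \<forall>e\<in>E. \<bar>xn n s e - xn m s e\<bar> \<le> \<epsilon>/2"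
      using cauchy_est[OF t1 h] by blast
    show "\<exists>M. \<forall>m\<ge>M. \<forall>n\<ge>M. dist (xn m t e) (xn n t e) < \<epsilon>"
    proof (intro exI allI impI)
      fix m n assume "N \<le> m" "N \<le> n"
      moreover have "t \<in> {0..t+1}" using assms by simp
      ultimately have "\<bar>xn m t e - xn n t e\<bar> \<le> \<epsilon>/2" using N assms(2) by blast
      thus "dist (xn m t e) (xn n t e) < \<epsilon>" using \<open>\<epsilon> > 0\<close> by (simp add: dist_real_def)
    qed
  qed
  thus ?thesis unfolding xl_def by (simp add: Cauchy_convergent_iff convergent_LIMSEQ_iff)
qed

lemma limit_le:
  assumes "(X \<longlongrightarrow> (l::real)) sequentially" "\<And>n. n \<ge> N \<Longrightarrow> X n \<le> c"
  shows "l \<le> c"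
  by (rule tendsto_upperbound[OF assms(1)]) (use assms(2) in \<open>auto simp: eventually_sequentially\<close>)

lemma unif:
  assumes T: "T > 0" and \<epsilon>: "\<epsilon> > 0"
  shows "\<exists>N. \<forall>n\<ge>N. \<forall>t\<in>{0..T}. \<forall>e\<in>E. \<bar>xn n t e - xl t e\<bar> \<le> \<epsilon>"
proof -
  obtain N where N: "\<forall>n\<ge>N. \<forall>m\<ge>N. \<forall>t\<in>{0..T}. \<forall>e\<in>E. \<bar>xn n t e - xn m t e\<bar> \<le> \<epsilon>"
    using cauchy_est[OF T \<epsilon>] by blast
  show ?thesis
  proof (intro exI[of _ N] allI impI ballI)
    fix n t e assume n: "n \<ge> N" and t: "t \<in> {0..T}" and e: "e \<in> E"
    have "(\<lambda>m. \<bar>xn n t e - xn m t e\<bar>) \<longlonglongrightarrow> \<bar>xn n t e - xl t e\<bar>"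
      using xn_conv[of t e] t e by (intro tendsto_intros) auto
    thus "\<bar>xn n t e - xl t e\<bar> \<le> \<epsilon>" by (rule limit_le[where N=N]) (use N n t e in auto)
  qed
qed

lemma xl_0: "e \<in> E \<Longrightarrow> xl 0 e = x0 e"
  using xn_conv[of 0 e] by (simp add: xn_0 LIMSEQ_const_iff)

lemma xn_lip:
  assumes "0 \<le> s" "s \<le> t" "e \<in> E"
  shows "\<bar>xn n t e - xn n s e\<bar> \<le> B * (t - s)"
proof -
  let ?g = "\<lambda>u. F (pp n (kk n u)) e"
  have It: "(?g has_integral (xn n t e - x0 e)) {0..t}" using xn_integral assms by simp
  have Is: "(?g has_integral (xn n s e - x0 e)) {0..s}" using xn_integral assms by simp
  have "?g integrable_on {0..t}" using It by blast
  hence "?g integrable_on {s..t}" by (rule integrable_subinterval_real) (use assms in simp)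
  then obtain J where J: "(?g has_integral J) {s..t}" by blast
  from has_integral_combine[OF assms(1,2) Is J] have "(?g has_integral (xn n s e - x0 e + J)) {0..t}" .
  from has_integral_unique[OF It this] have eq: "xn n t e - x0 e = xn n s e - x0 e + J" .
  have "norm J \<le> B * Henstock_Kurzweil_Integration.content {s..t}"
  proof (rule has_integral_bound_real[OF _ _ J])
    show "0 \<le> B" using Bpos by simp
    show "finite {}" by simp
    fix x assume "x \<in> {s..t} - {}"
    show "norm (?g x) \<le> B" using bnd[OF assms(3)] by simp
  qed
  hence "\<bar>J\<bar> \<le> B * (t - s)" using assms(2) by simp
  moreover have "xn n t e - xn n s e = J" using eq by simp
  ultimately show ?thesis by simp
qed

lemma xl_lip:
  assumes "0 \<le> s" "s \<le> t" "e \<in> E"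
  shows "\<bar>xl t e - xl s e\<bar> \<le> B * (t - s)"
proof -
  have "(\<lambda>n. \<bar>xn n t e - xn n s e\<bar>) \<longlonglongrightarrow> \<bar>xl t e - xl s e\<bar>"
    using xn_conv[of t e] xn_conv[of s e] assms by (intro tendsto_intros) auto
  thus ?thesis by (rule limit_le[where N=0]) (use xn_lip assms in auto)
qed

lemma xl_x0:
  assumes "0 \<le> t" "e \<in> E"
  shows "\<bar>xl t e - x0 e\<bar> \<le> B * t"
  using xl_lip[of 0 t e] xl_0[of e] assms by simp



definition RR :: "real \<Rightarrow> real" where "RR T = (\<Sum>e\<in>E. \<bar>x0 e\<bar>) + B * T"

lemma x0_le_sum: "e \<in> E \<Longrightarrow> \<bar>x0 e\<bar> \<le> (\<Sum>e\<in>E. \<bar>x0 e\<bar>)"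
  using member_le_sum[of e E "\<lambda>e. \<bar>x0 e\<bar>"] finE by simp

lemma xl_R: "0 \<le> s \<Longrightarrow> s \<le> T \<Longrightarrow> e \<in> E \<Longrightarrow> \<bar>xl s e\<bar> \<le> RR T"
proof -
  assume a: "0 \<le> s" "s \<le> T" "e \<in> E"
  have "B * s \<le> B * T" using a Bpos by simp
  thus ?thesis using xl_x0[of s e] x0_le_sum[of e] a unfolding RR_def by linarith
qed

lemma pp_R: "0 \<le> s \<Longrightarrow> s \<le> T \<Longrightarrow> e \<in> E \<Longrightarrow> \<bar>pp n (kk n s) e\<bar> \<le> RR T"
proof -
  assume a: "0 \<le> s" "s \<le> T" "e \<in> E"
  have "B * s \<le> B * T" using a Bpos by simp
  thus ?thesis using pp_kk_bound[of s e n] x0_le_sum[of e] a unfolding RR_def by linarith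
qed

lemma Fxl_cont:
  assumes "e \<in> E"
  shows "continuous_on {0..T} (\<lambda>s. F (xl s) e)"
  unfolding continuous_on_iff
proof (intro ballI allI impI)
  fix s \<epsilon> assume s: "s \<in> {0..T}" and \<epsilon>: "(\<epsilon>::real) > 0"
  obtain \<delta> where \<delta>: "\<delta> > 0" and uc\<delta>: "\<And>x y. (\<forall>e\<in>E. \<bar>x e\<bar> \<le> RR T \<and> \<bar>y e\<bar> \<le> RR T \<and> \<bar>x e - y e\<bar> \<le> \<delta>)
                 \<Longrightarrow> (\<forall>e\<in>E. \<bar>F x e - F y e\<bar> \<le> \<epsilon>/2)"
    using uc[of "\<epsilon>/2" "RR T"] \<epsilon> by auto
  show "\<exists>d>0. \<forall>s'\<in>{0..T}. dist s' s < d \<longrightarrow> dist (F (xl s') e) (F (xl s) e) < \<epsilon>"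
  proof (intro exI[of _ "\<delta>/B"] conjI ballI impI)
    show "\<delta>/B > 0" using \<delta> Bpos by simp
    fix s' assume s': "s' \<in> {0..T}" and d: "dist s' s < \<delta>/B"
    have "\<forall>e\<in>E. \<bar>xl s' e\<bar> \<le> RR T \<and> \<bar>xl s e\<bar> \<le> RR T \<and> \<bar>xl s' e - xl s e\<bar> \<le> \<delta>"
    proof
      fix e assume e: "e \<in> E"
      have "\<bar>xl s' e - xl s e\<bar> \<le> B * \<bar>s' - s\<bar>"
      proof (cases "s \<le> s'")
        case True thus ?thesis using xl_lip[of s s' e] s e by simp
      next
        case False thus ?thesis using xl_lip[of s' s e] s' e by (simp add: abs_minus_commute)
      qed
      also have "\<dots> \<le> \<delta>" using d Bpos unfolding dist_real_def by (simp add: less_divide_eq mult.commute)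
      finally show "\<bar>xl s' e\<bar> \<le> RR T \<and> \<bar>xl s e\<bar> \<le> RR T \<and> \<bar>xl s' e - xl s e\<bar> \<le> \<delta>"
        using xl_R s s' e by auto
    qed
    from uc\<delta>[OF this] assms have "\<bar>F (xl s') e - F (xl s) e\<bar> \<le> \<epsilon>/2" by blast
    thus "dist (F (xl s') e) (F (xl s) e) < \<epsilon>" using \<epsilon> unfolding dist_real_def by simp
  qed
qed

lemma zero_if_small: "(\<And>\<epsilon>. \<epsilon> > 0 \<Longrightarrow> \<bar>a::real\<bar> \<le> \<epsilon>) \<Longrightarrow> a = 0"
  by (metis abs_le_zero_iff dense not_le zero_less_abs_iff)

lemma xl_integral:
  assumes t: "t \<ge> 0" and e: "e \<in> E"
  shows "xl t e = x0 e + integral {0..t} (\<lambda>s. F (xl s) e)"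
proof -
  let ?f = "\<lambda>s. F (xl s) e"
  let ?I = "integral {0..t} ?f"
  have intf: "(?f has_integral ?I) {0..t}"
    using Fxl_cont[OF e, of t] by (intro integrable_integral integrable_continuous_real)
  have "xl t e - x0 e - ?I = 0"
  proof (rule zero_if_small)
    fix \<epsilon> :: real assume \<epsilon>: "\<epsilon> > 0"
    define \<epsilon>2 where "\<epsilon>2 = \<epsilon> / (2 * (t + 1))"
    have \<epsilon>2: "\<epsilon>2 > 0" unfolding \<epsilon>2_def using \<epsilon> t by simp
    obtain \<delta> where \<delta>: "\<delta> > 0" and uc\<delta>: "\<And>x y. (\<forall>e\<in>E. \<bar>x e\<bar> \<le> RR (t+1) \<and> \<bar>y e\<bar> \<le> RR (t+1) \<and> \<bar>x e - y e\<bar> \<le> \<delta>)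
                 \<Longrightarrow> (\<forall>e\<in>E. \<bar>F x e - F y e\<bar> \<le> \<epsilon>2)"
      using uc[OF \<epsilon>2, of "RR (t+1)"] by blast
    define \<eta> where "\<eta> = min (\<delta>/2) (\<epsilon>/2)"
    have \<eta>: "\<eta> > 0" unfolding \<eta>_def using \<delta> \<epsilon> by simp
    have t1: "t + 1 > 0" using t by simp
    obtain N1 where N1: "\<forall>n\<ge>N1. \<forall>s\<in>{0..t+1}. \<forall>e\<in>E. \<bar>xn n s e - xl s e\<bar> \<le> \<eta>"
      using unif[OF t1 \<eta>] by blast
    define n where "n = max N1 (nat \<lceil>2 * B / \<delta>\<rceil>)"
    have hn: "B * hh n \<le> \<delta>/2"
    proof -
      have "2 * B / \<delta> \<le> real n + 1" unfolding n_def by linarith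
      hence "2 * B \<le> \<delta> * (real n + 1)" using \<delta> by (simp add: divide_le_eq mult.commute)
      thus ?thesis unfolding hh_def using \<delta> by (simp add: divide_le_eq mult.commute)
    qed
    have nN: "n \<ge> N1" unfolding n_def by simp
    let ?g = "\<lambda>s. F (pp n (kk n s)) e"
    have close: "\<bar>?g s - ?f s\<bar> \<le> \<epsilon>2" if s: "s \<in> {0..t}" for s
    proof -
      have s1: "s \<in> {0..t+1}" using s by auto
      have "\<forall>e\<in>E. \<bar>pp n (kk n s) e\<bar> \<le> RR (t+1) \<and> \<bar>xl s e\<bar> \<le> RR (t+1) \<and> \<bar>pp n (kk n s) e - xl s e\<bar> \<le> \<delta>"
      proof
        fix e assume e: "e \<in> E"
        have "\<bar>xn n s e - pp n (kk n s) e\<bar> \<le> B * hh n" using xn_near[of s e n] s e by simp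
        moreover have "\<bar>xn n s e - xl s e\<bar> \<le> \<eta>" using N1 nN s1 e by blast
        moreover have "\<eta> \<le> \<delta>/2" unfolding \<eta>_def by simp
        ultimately have "\<bar>pp n (kk n s) e - xl s e\<bar> \<le> \<delta>" using hn by linarith
        thus "\<bar>pp n (kk n s) e\<bar> \<le> RR (t+1) \<and> \<bar>xl s e\<bar> \<le> RR (t+1) \<and> \<bar>pp n (kk n s) e - xl s e\<bar> \<le> \<delta>"
          using xl_R[of s "t+1" e] pp_R[of s "t+1" e n] s e by auto
      qed
      from uc\<delta>[OF this] e show ?thesis by blast
    qed
    have ig: "(?g has_integral (xn n t e - x0 e)) {0..t}" by (rule xn_integral[OF t])
    have "((\<lambda>s. ?g s - ?f s) has_integral ((xn n t e - x0 e) - ?I)) {0..t}"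
      by (rule has_integral_diff[OF ig intf])
    hence "norm ((xn n t e - x0 e) - ?I) \<le> \<epsilon>2 * Henstock_Kurzweil_Integration.content {0..t}"
    proof (rule has_integral_bound_real[rotated 2])
      show "0 \<le> \<epsilon>2" using \<epsilon>2 by simp
      show "finite {}" by simp
      fix x assume "x \<in> {0..t} - {}"
      thus "norm (?g x - ?f x) \<le> \<epsilon>2" using close by simp
    qed
    hence A: "\<bar>(xn n t e - x0 e) - ?I\<bar> \<le> \<epsilon>2 * t" using t by simp
    have "\<epsilon>2 * t \<le> \<epsilon>/2" unfolding \<epsilon>2_def using \<epsilon> t by (simp add: field_simps)
    moreover have "\<bar>xn n t e - xl t e\<bar> \<le> \<epsilon>/2"
      using N1 nN t e unfolding \<eta>_def by fastforce
    ultimately show "\<bar>xl t e - x0 e - ?I\<bar> \<le> \<epsilon>" using A by linarith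
  qed
  thus ?thesis by simp
qed

lemma xl_deriv:
  assumes t: "t \<ge> 0" and e: "e \<in> E"
  shows "((\<lambda>s. xl s e) has_real_derivative F (xl t) e) (at t within {0..})"
proof -
  let ?f = "\<lambda>s. F (xl s) e"
  define b where "b = t + 1"
  have tb: "t \<in> {0..b}" unfolding b_def using t by simp
  have I: "((\<lambda>u. integral {0..u} ?f) has_real_derivative ?f t) (at t within {0..b})"
    by (rule integral_has_real_derivative[OF Fxl_cont[OF e] tb])
  have "((\<lambda>u. x0 e + integral {0..u} ?f) has_real_derivative ?f t) (at t within {0..b})"
    using DERIV_add[OF DERIV_const[of "x0 e"] I] by simp
  hence D: "((\<lambda>s. xl s e) has_real_derivative ?f t) (at t within {0..b})"
  proof (rule has_field_derivative_transform_within[OF _ zero_less_one tb])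
    fix x assume "x \<in> {0..b}"
    thus "x0 e + integral {0..x} ?f = xl x e" using xl_integral[of x e] e by simp
  qed
  have "at t within {0..} = at t within {0..b}"
    by (rule at_within_nhd[of _ "{..<b}"]) (auto simp: b_def t)
  thus ?thesis using D by simp
qed

lemma existence:
  "\<exists>x. (\<forall>e\<in>E. x 0 e = x0 e) \<and> (\<forall>t\<ge>0. \<forall>e\<in>E. ((\<lambda>s. x s e) has_real_derivative F (x t) e) (at t within {0..}))"
  using xl_0 xl_deriv by blast

lemma uniqueness:
  assumes x: "\<And>t e. t \<ge> 0 \<Longrightarrow> e \<in> E \<Longrightarrow> ((\<lambda>s. x s e) has_real_derivative F (x t) e) (at t within {0..})"
    and y: "\<And>t e. t \<ge> 0 \<Longrightarrow> e \<in> E \<Longrightarrow> ((\<lambda>s. y s e) has_real_derivative F (y t) e) (at t within {0..})"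
    and x0y0: "\<And>e. e \<in> E \<Longrightarrow> x 0 e = y 0 e"
    and T: "T \<ge> 0" and e0: "e0 \<in> E"
  shows "x T e0 = y T e0"
proof -
  define \<phi> where "\<phi> t = (\<Sum>e\<in>E. (x t e - y t e)\<^sup>2)" for t
  define \<phi>' where "\<phi>' t = (\<Sum>e\<in>E. 2 * (x t e - y t e) * (F (x t) e - F (y t) e))" for t
  have "(\<phi>' has_integral (\<phi> T - \<phi> 0)) {0..T}"
  proof (rule fundamental_theorem_of_calculus[OF T])
    fix t assume t: "t \<in> {0..T}"
    have "(\<phi> has_real_derivative \<phi>' t) (at t within {0..})"
      unfolding \<phi>_def[abs_def] \<phi>'_def
      by (intro DERIV_sum) (use t x y in \<open>auto intro!: derivative_eq_intros simp: algebra_simps\<close>)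
    hence "(\<phi> has_real_derivative \<phi>' t) (at t within {0..T})"
      by (rule has_field_derivative_subset) auto
    thus "(\<phi> has_vector_derivative \<phi>' t) (at t within {0..T})"
      by (simp add: has_real_derivative_iff_has_vector_derivative)
  qed
  moreover have "((\<lambda>_. 0) has_integral 0) {0..T}" by simp
  moreover have "\<phi>' t \<le> 0" for t
  proof -
    have "\<phi>' t = 2 * (\<Sum>e\<in>E. (F (x t) e - F (y t) e) * (x t e - y t e))"
      unfolding \<phi>'_def by (simp add: sum_distrib_left algebra_simps)
    thus ?thesis using diss[of "x t" "y t"] by simp
  qed
  ultimately have "\<phi> T - \<phi> 0 \<le> 0" by (rule has_integral_le) 
  moreover have "\<phi> 0 = 0" unfolding \<phi>_def using x0y0 by simp
  moreover have "(x T e0 - y T e0)\<^sup>2 \<le> \<phi> T"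
    unfolding \<phi>_def using member_le_sum[of e0 E "\<lambda>e. (x T e - y T e)\<^sup>2"] e0 finE by simp
  ultimately have "(x T e0 - y T e0)\<^sup>2 \<le> 0" by linarith
  thus ?thesis by simp
qed

end


lemma lessThan4: "{..<4::nat} = {0,1,2,3}" by auto

lemma swaps: "{2,0} = {0,2::nat}" "{3,1} = {1,3::nat}" "{2,1} = {1,2::nat}" "{3,0} = {0,3::nat}" "{1,0} = {0,1::nat}" "{3,2} = {2,3::nat}"
  by auto
lemma swaps2: "{3, Suc 0} = {Suc 0, 3::nat}" "{2, Suc 0} = {Suc 0, 2::nat}" "{Suc 0, 0} = {0, Suc 0}"
  by auto

lemma d01: "{..<4::nat} - {0,1} = {2,3}" by auto
lemma mm01: "Min ({..<4::nat} - {0,1}) = 2" "Max ({..<4::nat} - {0,1}) = 3"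
  unfolding d01 by simp_all
lemma d23: "{..<4::nat} - {2,3} = {0,1}" by auto
lemma mm23: "Min ({..<4::nat} - {2,3}) = 0" "Max ({..<4::nat} - {2,3}) = 1"
  unfolding d23 by simp_all
lemma d02: "{..<4::nat} - {0,2} = {1,3}" by auto
lemma mm02: "Min ({..<4::nat} - {0,2}) = 1" "Max ({..<4::nat} - {0,2}) = 3"
  unfolding d02 by simp_all
lemma d13: "{..<4::nat} - {1,3} = {0,2}" by auto
lemma mm13: "Min ({..<4::nat} - {1,3}) = 0" "Max ({..<4::nat} - {1,3}) = 2"
  unfolding d13 by simp_all
lemma d03: "{..<4::nat} - {0,3} = {1,2}" by auto
lemma mm03: "Min ({..<4::nat} - {0,3}) = 1" "Max ({..<4::nat} - {0,3}) = 2"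
  unfolding d03 by simp_all
lemma d12: "{..<4::nat} - {1,2} = {0,3}" by auto
lemma mm12: "Min ({..<4::nat} - {1,2}) = 0" "Max ({..<4::nat} - {1,2}) = 3"
  unfolding d12 by simp_all

lemma ext01: "ext_dihedral L 0 1 = Ang (L{0,1}+L{2,3}) (L{0,2}+L{1,3}) (L{0,3}+L{1,2})"
  unfolding ext_dihedral_def Ang_def Let_def mm01 by simp
lemma ext23: "ext_dihedral L 2 3 = Ang (L{0,1}+L{2,3}) (L{0,2}+L{1,3}) (L{0,3}+L{1,2})"
  unfolding ext_dihedral_def Ang_def Let_def mm23 by (simp add: swaps swaps2 add.commute)
lemma ext02: "ext_dihedral L 0 2 = Ang (L{0,2}+L{1,3}) (L{0,1}+L{2,3}) (L{0,3}+L{1,2})"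
  unfolding ext_dihedral_def Ang_def Let_def mm02 by (simp add: swaps swaps2 add.commute)
lemma ext13: "ext_dihedral L 1 3 = Ang (L{0,2}+L{1,3}) (L{0,1}+L{2,3}) (L{0,3}+L{1,2})"
  unfolding ext_dihedral_def Ang_def Let_def mm13 by (simp add: swaps swaps2 add.commute)
lemma ext03: "ext_dihedral L 0 3 = Ang (L{0,3}+L{1,2}) (L{0,1}+L{2,3}) (L{0,2}+L{1,3})"
  unfolding ext_dihedral_def Ang_def Let_def mm03 by (simp add: swaps swaps2 add.commute)
lemma ext12: "ext_dihedral L 1 2 = Ang (L{0,3}+L{1,2}) (L{0,1}+L{2,3}) (L{0,2}+L{1,3})"
  unfolding ext_dihedral_def Ang_def Let_def mm12 by (simp add: swaps swaps2 add.commute)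


lemma mem6: "a < 4 \<Longrightarrow> b < 4 \<Longrightarrow> a \<noteq> b \<Longrightarrow> {a,b} \<in> {{i,j} | i j::nat. i<4 \<and> j<4 \<and> i\<noteq>j}"
  by blast

lemma P6_eq: "{{i,j} | i j::nat. i<4 \<and> j<4 \<and> i\<noteq>j} = {{0,1},{0,2},{0,3},{1,2},{1,3},{2,3}}"
proof
  show "{{i,j} | i j::nat. i<4 \<and> j<4 \<and> i\<noteq>j} \<subseteq> {{0,1},{0,2},{0,3},{1,2},{1,3},{2,3}}"
  proof
    fix p assume "p \<in> {{i,j} | i j::nat. i<4 \<and> j<4 \<and> i\<noteq>j}"
    then obtain i j :: nat where p: "p = {i,j}" "i < 4" "j < 4" "i \<noteq> j" by blast
    have "i \<in> {..<4}" "j \<in> {..<4}" using p(2,3) by simp_all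
    hence "i \<in> {0,1,2,3}" "j \<in> {0,1,2,3}" unfolding lessThan4 .
    hence "{i,j} = {0,1} \<or> {i,j} = {0,2} \<or> {i,j} = {0,3} \<or> {i,j} = {1,2} \<or> {i,j} = {1,3} \<or> {i,j} = {2,3::nat}"
      using p(4) apply (elim insertE) apply (simp_all add: swaps swaps2) done
    thus "p \<in> {{0,1},{0,2},{0,3},{1,2},{1,3},{2,3}}"
      using p(1) by simp
  qed
next
  show "{{0,1},{0,2},{0,3},{1,2},{1,3},{2,3}} \<subseteq> {{i,j} | i j::nat. i<4 \<and> j<4 \<and> i\<noteq>j}"
  proof -
    have "{0,1} \<in> {{i,j} | i j::nat. i<4 \<and> j<4 \<and> i\<noteq>j}" "{0,2} \<in> {{i,j} | i j::nat. i<4 \<and> j<4 \<and> i\<noteq>j}"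
      "{0,3} \<in> {{i,j} | i j::nat. i<4 \<and> j<4 \<and> i\<noteq>j}" "{1,2} \<in> {{i,j} | i j::nat. i<4 \<and> j<4 \<and> i\<noteq>j}"
      "{1,3} \<in> {{i,j} | i j::nat. i<4 \<and> j<4 \<and> i\<noteq>j}" "{2,3} \<in> {{i,j} | i j::nat. i<4 \<and> j<4 \<and> i\<noteq>j}"
      by (rule mem6; simp)+
    thus ?thesis by (simp only: insert_subset empty_subsetI)
  qed
qed

lemma tet_edges_eq: "tet_edges T = T \<times> {{0,1},{0,2},{0,3},{1,2},{1,3},{2,3}}"
  unfolding P6_eq[symmetric] tet_edges_def by auto

lemma finite_tet_edges: "finite T \<Longrightarrow> finite (tet_edges T)"
  unfolding tet_edges_eq by simp

lemma sum_P6: "(\<Sum>p\<in>{{0,1},{0,2},{0,3},{1,2},{1,3},{2,3}}. f p) = f {0,1} + f {0,2} + f {0,3} + f {1,2} + f {1,3} + f {2,3::nat}"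
  apply (subst sum.insert, simp, simp add: doubleton_eq_iff)+
  apply (simp add: add.assoc)
  done


definition alpha :: "'a set \<Rightarrow> ('a \<times> nat \<Rightarrow> ('a \<times> nat \<times> (nat \<Rightarrow> nat)) option) \<Rightarrow> (('a \<times> nat set) set \<Rightarrow> real) \<Rightarrow> 'a \<times> nat set \<Rightarrow> real" where
  "alpha T glue l x = ext_dihedral (\<lambda>q. l (edge_class T glue (fst x, q))) (Min (snd x)) (Max (snd x))"

lemma gen_curv_alt: "gen_curv T glue l e = 2 * pi - (\<Sum>x\<in>{x \<in> tet_edges T. edge_class T glue x = e}. alpha T glue l x)"
  unfolding gen_curv_def alpha_def by (simp add: case_prod_unfold)

lemma edges_image: "edges T glue = edge_class T glue ` tet_edges T"
  unfolding edges_def quotient_def edge_class_def by auto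

lemma ext_bounds: "0 \<le> ext_dihedral L i j" "ext_dihedral L i j \<le> pi"
  unfolding ext_dihedral_def Let_def by (rule gen_angle_bounds; simp)+

lemma alpha_bounds: "0 \<le> alpha T glue l x" "alpha T glue l x \<le> pi"
  unfolding alpha_def by (rule ext_bounds)+

definition sA :: "'a set \<Rightarrow> ('a \<times> nat \<Rightarrow> ('a \<times> nat \<times> (nat \<Rightarrow> nat)) option) \<Rightarrow> (('a \<times> nat set) set \<Rightarrow> real) \<Rightarrow> 'a \<Rightarrow> nat set \<Rightarrow> nat set \<Rightarrow> real" where
  "sA T glue l \<sigma> p q = l (edge_class T glue (\<sigma>, p)) + l (edge_class T glue (\<sigma>, q))"

lemma Min_Max_pairs: "Min {0,1::nat} = 0" "Max {0,1::nat} = 1" "Min {2,3::nat} = 2" "Max {2,3::nat} = 3" "Min {0,2::nat} = 0" "Max {0,2::nat} = 2" "Min {1,3::nat} = 1" "Max {1,3::nat} = 3" "Min {0,3::nat} = 0" "Max {0,3::nat} = 3" "Min {1,2::nat} = 1" "Max {1,2::nat} = 2"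
  by simp_all

lemma alpha_explicit:
  fixes T glue l \<sigma>
  defines "s1 \<equiv> sA T glue l \<sigma> {0,1} {2,3}" and "s2 \<equiv> sA T glue l \<sigma> {0,2} {1,3}" and "s3 \<equiv> sA T glue l \<sigma> {0,3} {1,2}"
  shows "alpha T glue l (\<sigma>, {0,1}) = Ang s1 s2 s3" "alpha T glue l (\<sigma>, {2,3}) = Ang s1 s2 s3"
    "alpha T glue l (\<sigma>, {0,2}) = Ang s2 s1 s3" "alpha T glue l (\<sigma>, {1,3}) = Ang s2 s1 s3"
    "alpha T glue l (\<sigma>, {0,3}) = Ang s3 s1 s2" "alpha T glue l (\<sigma>, {1,2}) = Ang s3 s1 s2"
  unfolding alpha_def s1_def s2_def s3_def sA_def
  by (simp_all only: fst_conv snd_conv ext01 ext23 ext02 ext13 ext03 ext12 Min_Max_pairs)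


abbreviation P6 :: "nat set set" where "P6 \<equiv> {{0,1},{0,2},{0,3},{1,2},{1,3},{2,3}}"

lemma cls_in_edges: "\<sigma> \<in> T \<Longrightarrow> p \<in> P6 \<Longrightarrow> edge_class T glue (\<sigma>, p) \<in> edges T glue"
  unfolding edges_image tet_edges_eq by (rule imageI, rule SigmaI)

lemma finite_edges: "finite T \<Longrightarrow> finite (edges T glue)"
  unfolding edges_image by (simp add: finite_tet_edges)

lemma curv_bound:
  assumes "finite T"
  shows "\<bar>gen_curv T glue l e\<bar> \<le> 2 * pi + pi * real (card (tet_edges T))"
proof -
  let ?S = "{x \<in> tet_edges T. edge_class T glue x = e}"
  have fin: "finite (tet_edges T)" using assms by (rule finite_tet_edges)
  have "(\<Sum>x\<in>?S. alpha T glue l x) \<le> (\<Sum>x\<in>?S. pi)" by (rule sum_mono) (rule alpha_bounds)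
  also have "\<dots> = pi * real (card ?S)" by simp
  also have "\<dots> \<le> pi * real (card (tet_edges T))"
    using card_mono[OF fin, of ?S] by (intro mult_left_mono) auto
  finally have up: "(\<Sum>x\<in>?S. alpha T glue l x) \<le> pi * real (card (tet_edges T))" .
  have lo: "0 \<le> (\<Sum>x\<in>?S. alpha T glue l x)" by (rule sum_nonneg) (rule alpha_bounds)
  show ?thesis unfolding gen_curv_alt using up lo pi_gt_zero by linarith
qed


lemma sA_bounds:
  assumes "\<sigma> \<in> T" "p \<in> P6" "q \<in> P6"
    and H: "\<forall>e\<in>edges T glue. \<bar>x e\<bar> \<le> R \<and> \<bar>y e\<bar> \<le> R \<and> \<bar>x e - y e\<bar> \<le> \<delta>"
  shows "\<bar>sA T glue x \<sigma> p q\<bar> \<le> 2 * R" "\<bar>sA T glue y \<sigma> p q\<bar> \<le> 2 * R"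
    "\<bar>sA T glue x \<sigma> p q - sA T glue y \<sigma> p q\<bar> \<le> 2 * \<delta>"
proof -
  have p: "edge_class T glue (\<sigma>, p) \<in> edges T glue" by (rule cls_in_edges[OF assms(1,2)])
  have q: "edge_class T glue (\<sigma>, q) \<in> edges T glue" by (rule cls_in_edges[OF assms(1,3)])
  have hp: "\<bar>x (edge_class T glue (\<sigma>, p))\<bar> \<le> R" "\<bar>y (edge_class T glue (\<sigma>, p))\<bar> \<le> R"
     "\<bar>x (edge_class T glue (\<sigma>, p)) - y (edge_class T glue (\<sigma>, p))\<bar> \<le> \<delta>" using H p by auto
  have hq: "\<bar>x (edge_class T glue (\<sigma>, q))\<bar> \<le> R" "\<bar>y (edge_class T glue (\<sigma>, q))\<bar> \<le> R"
     "\<bar>x (edge_class T glue (\<sigma>, q)) - y (edge_class T glue (\<sigma>, q))\<bar> \<le> \<delta>" using H q by auto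
  show "\<bar>sA T glue x \<sigma> p q\<bar> \<le> 2 * R" "\<bar>sA T glue y \<sigma> p q\<bar> \<le> 2 * R"
    "\<bar>sA T glue x \<sigma> p q - sA T glue y \<sigma> p q\<bar> \<le> 2 * \<delta>"
    unfolding sA_def using hp hq by linarith+
qed


lemma curv_uc:
  assumes fin: "finite T" and \<epsilon>: "\<epsilon> > 0"
  shows "\<exists>\<delta>>0. \<forall>x y. (\<forall>e\<in>edges T glue. \<bar>x e\<bar> \<le> R \<and> \<bar>y e\<bar> \<le> R \<and> \<bar>x e - y e\<bar> \<le> \<delta>)
                 \<longrightarrow> (\<forall>e\<in>edges T glue. \<bar>gen_curv T glue x e - gen_curv T glue y e\<bar> \<le> \<epsilon>)"
proof -
  define N where "N = real (card (tet_edges T))"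
  define \<epsilon>' where "\<epsilon>' = \<epsilon> / (N + 1)"
  have N0: "N \<ge> 0" unfolding N_def by simp
  have \<epsilon>': "\<epsilon>' > 0" unfolding \<epsilon>'_def using \<epsilon> N0 by simp
  obtain \<delta>0 where \<delta>0: "\<delta>0 > 0" and U: "\<forall>a b c a' b' c'. \<bar>a\<bar> \<le> 2 * R \<and> \<bar>b\<bar> \<le> 2 * R \<and> \<bar>c\<bar> \<le> 2 * R \<and> \<bar>a'\<bar> \<le> 2 * R \<and> \<bar>b'\<bar> \<le> 2 * R \<and> \<bar>c'\<bar> \<le> 2 * R
      \<and> \<bar>a - a'\<bar> \<le> \<delta>0 \<and> \<bar>b - b'\<bar> \<le> \<delta>0 \<and> \<bar>c - c'\<bar> \<le> \<delta>0 \<longrightarrow> \<bar>Ang a b c - Ang a' b' c'\<bar> \<le> \<epsilon>'"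
    using Ang_uc[OF \<epsilon>', of "2 * R"] by blast
  show ?thesis
  proof (intro exI[of _ "\<delta>0/2"] conjI allI impI ballI)
    show "\<delta>0/2 > 0" using \<delta>0 by simp
    fix x y e
    assume H: "\<forall>e\<in>edges T glue. \<bar>x e\<bar> \<le> R \<and> \<bar>y e\<bar> \<le> R \<and> \<bar>x e - y e\<bar> \<le> \<delta>0/2" and e: "e \<in> edges T glue"
    have close: "\<bar>alpha T glue x z - alpha T glue y z\<bar> \<le> \<epsilon>'" if z: "z \<in> tet_edges T" for z
    proof -
      obtain \<sigma> p where zz1: "z = (\<sigma>, p)" by (cases z)
      have zz2: "\<sigma> \<in> T" "p \<in> P6" using z unfolding zz1 tet_edges_eq by (rule SigmaD1, rule SigmaD2)
      note zz = zz1 zz2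
      define s1 where "s1 l = sA T glue l \<sigma> {0,1} {2,3}" for l
      define s2 where "s2 l = sA T glue l \<sigma> {0,2} {1,3}" for l
      define s3 where "s3 l = sA T glue l \<sigma> {0,3} {1,2}" for l
      have b1: "\<bar>s1 x\<bar> \<le> 2 * R" "\<bar>s1 y\<bar> \<le> 2 * R" "\<bar>s1 x - s1 y\<bar> \<le> \<delta>0"
        unfolding s1_def using sA_bounds[OF zz(2) _ _ H, of "{0,1}" "{2,3}"] by auto
      have b2: "\<bar>s2 x\<bar> \<le> 2 * R" "\<bar>s2 y\<bar> \<le> 2 * R" "\<bar>s2 x - s2 y\<bar> \<le> \<delta>0"
        unfolding s2_def using sA_bounds[OF zz(2) _ _ H, of "{0,2}" "{1,3}"] by auto
      have b3: "\<bar>s3 x\<bar> \<le> 2 * R" "\<bar>s3 y\<bar> \<le> 2 * R" "\<bar>s3 x - s3 y\<bar> \<le> \<delta>0"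
        unfolding s3_def using sA_bounds[OF zz(2) _ _ H, of "{0,3}" "{1,2}"] by auto
      have A1: "\<bar>Ang (s1 x) (s2 x) (s3 x) - Ang (s1 y) (s2 y) (s3 y)\<bar> \<le> \<epsilon>'"
        by (rule U[rule_format]) (simp add: b1 b2 b3)
      have A2: "\<bar>Ang (s2 x) (s1 x) (s3 x) - Ang (s2 y) (s1 y) (s3 y)\<bar> \<le> \<epsilon>'"
        by (rule U[rule_format]) (simp add: b1 b2 b3)
      have A3: "\<bar>Ang (s3 x) (s1 x) (s2 x) - Ang (s3 y) (s1 y) (s2 y)\<bar> \<le> \<epsilon>'"
        by (rule U[rule_format]) (simp add: b1 b2 b3)
      from zz(3) show ?thesis
        unfolding zz(1) s1_def s2_def s3_def
        apply (elim insertE)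
        apply (simp_all only: alpha_explicit A1[unfolded s1_def s2_def s3_def] A2[unfolded s1_def s2_def s3_def] A3[unfolded s1_def s2_def s3_def])
        apply simp
        done
    qed
    let ?S = "{z \<in> tet_edges T. edge_class T glue z = e}"
    have finS: "finite ?S" using finite_tet_edges[OF fin] by simp
    have "gen_curv T glue x e - gen_curv T glue y e = (\<Sum>z\<in>?S. alpha T glue y z - alpha T glue x z)"
      unfolding gen_curv_alt by (simp add: sum_subtractf)
    hence "\<bar>gen_curv T glue x e - gen_curv T glue y e\<bar> \<le> (\<Sum>z\<in>?S. \<bar>alpha T glue y z - alpha T glue x z\<bar>)"
      by (simp add: sum_abs)
    also have "\<dots> \<le> (\<Sum>z\<in>?S. \<epsilon>')"
      by (rule sum_mono) (use close in \<open>auto simp: abs_minus_commute\<close>)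
    also have "\<dots> = \<epsilon>' * real (card ?S)" by simp
    also have "\<dots> \<le> \<epsilon>' * N"
      unfolding N_def using card_mono[OF finite_tet_edges[OF fin], of ?S] \<epsilon>' by (intro mult_left_mono) auto
    also have "\<dots> \<le> \<epsilon>"
    proof -
      have "\<epsilon>' * N \<le> \<epsilon>' * (N + 1)" using \<epsilon>' by simp
      also have "\<dots> = \<epsilon>" unfolding \<epsilon>'_def using N0 by simp
      finally show ?thesis .
    qed
    finally show "\<bar>gen_curv T glue x e - gen_curv T glue y e\<bar> \<le> \<epsilon>" .
  qed
qed



lemma sigma_nonneg:
  fixes x y :: "('a \<times> nat set) set \<Rightarrow> real"
  shows "0 \<le> (\<Sum>p\<in>P6. (alpha T glue x (\<sigma>, p) - alpha T glue y (\<sigma>, p)) * (x (edge_class T glue (\<sigma>, p)) - y (edge_class T glue (\<sigma>, p))))"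
proof -
  define s1 where "s1 l = sA T glue l \<sigma> {0,1} {2,3}" for l
  define s2 where "s2 l = sA T glue l \<sigma> {0,2} {1,3}" for l
  define s3 where "s3 l = sA T glue l \<sigma> {0,3} {1,2}" for l
  have "(\<Sum>p\<in>P6. (alpha T glue x (\<sigma>, p) - alpha T glue y (\<sigma>, p)) * (x (edge_class T glue (\<sigma>, p)) - y (edge_class T glue (\<sigma>, p))))
    = (Ang (s1 x) (s2 x) (s3 x) - Ang (s1 y) (s2 y) (s3 y)) * (s1 x - s1 y)
      + (Ang (s2 x) (s1 x) (s3 x) - Ang (s2 y) (s1 y) (s3 y)) * (s2 x - s2 y)
      + (Ang (s3 x) (s1 x) (s2 x) - Ang (s3 y) (s1 y) (s2 y)) * (s3 x - s3 y)"
    unfolding sum_P6 alpha_explicit s1_def s2_def s3_def unfolding sA_def by (simp add: algebra_simps)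
  also have "\<dots> \<ge> 0" by (rule Ang_mono)
  finally show ?thesis .
qed

lemma curv_diss:
  assumes fin: "finite T"
  shows "(\<Sum>e\<in>edges T glue. (gen_curv T glue x e - gen_curv T glue y e) * (x e - y e)) \<le> 0"
proof -
  define h where "h z = (alpha T glue x z - alpha T glue y z) * (x (edge_class T glue z) - y (edge_class T glue z))" for z
  have finTE: "finite (tet_edges T)" using fin by (rule finite_tet_edges)
  have 1: "(gen_curv T glue x e - gen_curv T glue y e) * (x e - y e) = - (\<Sum>z\<in>{z \<in> tet_edges T. edge_class T glue z = e}. h z)" for e
  proof -
    have "(gen_curv T glue x e - gen_curv T glue y e) * (x e - y e)
       = - ((\<Sum>z\<in>{z \<in> tet_edges T. edge_class T glue z = e}. alpha T glue x z - alpha T glue y z) * (x e - y e))"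
      unfolding gen_curv_alt by (simp add: sum_subtractf algebra_simps)
    also have "(\<Sum>z\<in>{z \<in> tet_edges T. edge_class T glue z = e}. alpha T glue x z - alpha T glue y z) * (x e - y e)
       = (\<Sum>z\<in>{z \<in> tet_edges T. edge_class T glue z = e}. h z)"
      unfolding sum_distrib_right h_def by (rule sum.cong) auto
    finally show ?thesis .
  qed
  have 2: "(\<Sum>e\<in>edges T glue. (\<Sum>z\<in>{z \<in> tet_edges T. edge_class T glue z = e}. h z)) = (\<Sum>z\<in>tet_edges T. h z)"
    by (rule sum.group[OF finTE finite_edges[OF fin]]) (simp add: edges_image)
  have 3: "(\<Sum>z\<in>tet_edges T. h z) = (\<Sum>\<sigma>\<in>T. \<Sum>p\<in>P6. h (\<sigma>, p))"
    unfolding tet_edges_eq by (simp add: sum.cartesian_product)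
  have 4: "0 \<le> (\<Sum>\<sigma>\<in>T. \<Sum>p\<in>P6. h (\<sigma>, p))"
    unfolding h_def by (rule sum_nonneg) (rule sigma_nonneg)
  have "(\<Sum>e\<in>edges T glue. (gen_curv T glue x e - gen_curv T glue y e) * (x e - y e))
      = - (\<Sum>e\<in>edges T glue. (\<Sum>z\<in>{z \<in> tet_edges T. edge_class T glue z = e}. h z))"
    unfolding 1 by (simp add: sum_negf)
  thus ?thesis unfolding 2 3 using 4 by linarith
qed

theorem mainTheorem1:
  fixes T :: "'a set"
    and glue :: "'a \<times> nat \<Rightarrow> ('a \<times> nat \<times> (nat \<Rightarrow> nat)) option"
    and l0 :: "('a \<times> nat set) set \<Rightarrow> real"
  assumes "pseudo3 T glue" and "closed3 T glue"
  shows "\<exists>l. ricci_flow_solution T glue l0 l \<and>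
           (\<forall>l'. ricci_flow_solution T glue l0 l' \<longrightarrow>
                 (\<forall>t \<ge> 0. \<forall>e \<in> edges T glue. l' t e = l t e))"
proof -
  have finT: "finite T" using assms(1) unfolding pseudo3_def by blast
  define B where "B = 2 * pi + pi * real (card (tet_edges T))"
  interpret O: odeset "edges T glue" "gen_curv T glue" B l0
  proof
    show "finite (edges T glue)" by (rule finite_edges[OF finT])
    show "B > 0" unfolding B_def using pi_gt_zero by (simp add: add_pos_nonneg)
    show "\<bar>gen_curv T glue x e\<bar> \<le> B" for x e unfolding B_def by (rule curv_bound[OF finT])
    show "\<exists>\<delta>>0. \<forall>x y. (\<forall>e\<in>edges T glue. \<bar>x e\<bar> \<le> R \<and> \<bar>y e\<bar> \<le> R \<and> \<bar>x e - y e\<bar> \<le> \<delta>)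
                 \<longrightarrow> (\<forall>e\<in>edges T glue. \<bar>gen_curv T glue x e - gen_curv T glue y e\<bar> \<le> \<epsilon>)" if "\<epsilon> > 0" for R \<epsilon>
      by (rule curv_uc[OF finT that])
    show "(\<Sum>e\<in>edges T glue. (gen_curv T glue x e - gen_curv T glue y e) * (x e - y e)) \<le> 0" for x y
      by (rule curv_diss[OF finT])
  qed
  obtain x where x0: "\<forall>e\<in>edges T glue. x 0 e = l0 e"
    and xd: "\<forall>t\<ge>0. \<forall>e\<in>edges T glue. ((\<lambda>s. x s e) has_real_derivative gen_curv T glue (x t) e) (at t within {0..})"
    using O.existence by blast
  have sol: "ricci_flow_solution T glue l0 x" unfolding ricci_flow_solution_def using x0 xd by blast
  show ?thesis
  proof (intro exI[of _ x] conjI sol allI impI ballI)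
    fix l' and t :: real and e assume l': "ricci_flow_solution T glue l0 l'" and t: "t \<ge> 0" and e: "e \<in> edges T glue"
    show "l' t e = x t e"
    proof (rule O.uniqueness[OF _ _ _ t e])
      show "((\<lambda>s. l' s f) has_real_derivative gen_curv T glue (l' u) f) (at u within {0..})"
        if "u \<ge> 0" "f \<in> edges T glue" for u :: real and f
        using l' that unfolding ricci_flow_solution_def by blast
      show "((\<lambda>s. x s f) has_real_derivative gen_curv T glue (x u) f) (at u within {0..})"
        if "u \<ge> 0" "f \<in> edges T glue" for u :: real and f
        using xd that by blast
      show "l' 0 f = x 0 f" if "f \<in> edges T glue" for f
        using l' x0 that unfolding ricci_flow_solution_def by simp
    qed
  qed
qed


end
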